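(* Algorithm $\mathsf{AG}$ (described in the context) implements an asymmetric gather protocol, i.e., it satisfies the Common Core, Validity and Agreement properties defined in the context.
   Context: System model: a finite set $\mathcal{P}=\{p_1,\dots,p_n\}$ of processes communicating asynchronously over authenticated point-to-point links; every message sent from a correct process to a correct process is eventually delivered. A process that follows its protocol is correct; others (faulty, Byzantine) may behave arbitrarily. $F\subseteq\mathcal{P}$ denotes the (unknown) set of faulty processes of an execution. For $\mathcal{A}\subseteq 2^{\mathcal{P}}$, write $\mathcal{A}^*=\{A' : A'\subseteq A,\ A\in\mathcal{A}\}$. An asymmetric fail-prone system is an array $\mathbb{F}=[\mathcal{F}_1,\dots,\mathcal{F}_n]$ with $\mathcal{F}_i\subseteq 2^{\mathcal{P}}$. An asymmetric Byzantine quorum system for $\mathbb{F}$ is an array $\mathbb{Q}=[\mathcal{Q}_1,\dots,\mathcal{Q}_n]$ with $\mathcal{Q}_i\subseteq 2^{\mathcal{P}}$ (quorums for $p_i$) satisfying: (consistency) for all $i,j$, all $Q_i\in\mathcal{Q}_i$, $Q_j\in\mathcal{Q}_j$, $F_{ij}\in\mathcal{F}_i^*\cap\mathcal{F}_j^*$: $Q_i\cap Q_j\not\subseteq F_{ij}$; (availability) for all $i$ and $F_i\in\mathcal{F}_i$ there is $Q_i\in\mathcal{Q}_i$ with $F_i\cap Q_i=\emptyset$. A kernel for $p_i$ is a set $K\subseteq\mathcal{P}$ intersecting every $Q\in\mathcal{Q}_i$; $\mathcal{K}_i$ is the set of kernels for $p_i$. A correct process $p_i$ is wise if $F\in\mathcal{F}_i^*$.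 A guild is a set $\mathcal{G}$ of wise processes such that every $p_i\in\mathcal{G}$ has some $Q_i\in\mathcal{Q}_i$ with $Q_i\subseteq\mathcal{G}$. An execution with a guild is one in which a nonempty guild exists; the maximal guild $\mathcal{G}_{max}$ is the union of all guilds. Asymmetric reliable broadcast (arb-broadcast / arb-deliver) guarantees, in every execution with a guild: if a correct process arb-broadcasts $m$, every process of $\mathcal{G}_{max}$ eventually arb-delivers $m$; for each sender, all processes of $\mathcal{G}_{max}$ that arb-deliver from it deliver the same message; if some process of $\mathcal{G}_{max}$ arb-delivers a message from a sender, all processes of $\mathcal{G}_{max}$ eventually arb-deliver a message from that sender; a correct process arb-delivers at most one message per sender, and from a correct sender only a message it arb-broadcast. Algorithm $\mathsf{AG}$ (code of $p_i$; each correct process invokes ag-propose$(x_i)$ exactly once; each guarded "upon there being ..." action executes at most once, message handlers once per message). State: sets $S_i,T_i,U_i$ initially empty, boolean $sentT$ initially false. (1) Upon ag-propose$(x_i)$: arb-broadcast $(p_i,x_i)$. (2) Upon arb-delivering $(p_j,x_j)$ from $p_j$: $S_i\gets S_i\cup\{(p_j,x_j)\}$. (3) Upon there being $Q\in\mathcal{Q}_i$ such that for every $p_j\in Q$ some pair $(p_j,\cdot)\in S_i$: send $\langle\mathrm{DistributeS},p_i,S_i\rangle$ to all. (4) For a received $\langle\mathrm{DistributeS},p_j,S_j\rangle$: once $S_j\subseteq S_i$, provided $sentT$ is false at that moment, set $T_i\gets T_i\cup S_j$ and send $\langle\mathrm{Ack},p_i\rangle$ to $p_j$. (5) Upon Ack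 received from every member of some $Q\in\mathcal{Q}_i$: send Ready to all. (6) Upon Ready received from every member of some $Q\in\mathcal{Q}_i$: send Confirm to all. (7) Upon Confirm received from every member of some $K\in\mathcal{K}_i$: send Confirm to all. (8) Upon Confirm received from every member of some $Q\in\mathcal{Q}_i$: send $\langle\mathrm{DistributeT},p_i,T_i\rangle$ to all and set $sentT\gets$ true. (9) For a received $\langle\mathrm{DistributeT},p_j,T_j\rangle$ from $p_j$: once $T_j\subseteq S_i$, set $U_i\gets U_i\cup T_j$. (10) Upon DistributeT received from every member of some $Q\in\mathcal{Q}_i$: ag-deliver$(U_i)$. Asymmetric gather (interface ag-propose$(x)$ / ag-deliver$(U)$, where $U$ is a set of pairs $(p_j,x_j)$ meaning $p_j$ ag-proposed $x_j$) requires: (Common Core) in any execution with a guild, there exists a set $S^+$ composed of the values ag-proposed by the processes of some quorum $Q_i\in\mathcal{Q}_i$ of some process $p_i$ in the maximal guild, such that every process of the maximal guild that ag-delivers a set $U$ has $S^+\subseteq U$; (Validity) in any execution with a guild, if a process in the maximal guild includes $(p_j,x_j)$ in its ag-delivered set and $p_j$ is wise, then $p_j$ ag-proposed $x_j$; (Agreement) in any execution with a guild, for any two sets $U,U'$ ag-delivered by processes in the maximal guild, if $(p_j,x)\in U$ and $(p_j,x')\in U'$ then $x=x'$. *)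

theory Defs
  imports Main
begin

definition down_closure :: "'p set set \<Rightarrow> 'p set set" where
  "down_closure A = {A'. \<exists>B\<in>A. A' \<subseteq> B}"

definition asym_quorum_system ::
  "('p \<Rightarrow> 'p set set) \<Rightarrow> ('p \<Rightarrow> 'p set set) \<Rightarrow> bool" where
  "asym_quorum_system Fs Qs \<longleftrightarrow>
     (\<forall>i j Qi Qj Fij. Qi \<in> Qs i \<and> Qj \<in> Qs j \<and>
        Fij \<in> down_closure (Fs i) \<inter> down_closure (Fs j) \<longrightarrow> \<not> (Qi \<inter> Qj \<subseteq> Fij)) \<and>
     (\<forall>i. \<forall>Fi\<in>Fs i. \<exists>Qi\<in>Qs i. Fi \<inter> Qi = {})"

definition kernels :: "('p \<Rightarrow> 'p set set) \<Rightarrow> 'p \<Rightarrow> 'p set set" where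
  "kernels Qs i = {K. \<forall>Q\<in>Qs i. K \<inter> Q \<noteq> {}}"

definition wise :: "('p \<Rightarrow> 'p set set) \<Rightarrow> 'p set \<Rightarrow> 'p \<Rightarrow> bool" where
  "wise Fs F i \<longleftrightarrow> i \<notin> F \<and> F \<in> down_closure (Fs i)"

definition guild ::
  "('p \<Rightarrow> 'p set set) \<Rightarrow> ('p \<Rightarrow> 'p set set) \<Rightarrow> 'p set \<Rightarrow> 'p set \<Rightarrow> bool" where
  "guild Fs Qs F G \<longleftrightarrow> (\<forall>i\<in>G. wise Fs F i) \<and> (\<forall>i\<in>G. \<exists>Q\<in>Qs i. Q \<subseteq> G)"

definition max_guild ::
  "('p \<Rightarrow> 'p set set) \<Rightarrow> ('p \<Rightarrow> 'p set set) \<Rightarrow> 'p set \<Rightarrow> 'p set" where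
  "max_guild Fs Qs F = \<Union>{G. guild Fs Qs F G}"

definition has_guild ::
  "('p \<Rightarrow> 'p set set) \<Rightarrow> ('p \<Rightarrow> 'p set set) \<Rightarrow> 'p set \<Rightarrow> bool" where
  "has_guild Fs Qs F \<longleftrightarrow> (\<exists>G. G \<noteq> {} \<and> guild Fs Qs F G)"

text \<open>Point-to-point messages of AG. The sender field p_j of DistributeS / Ack /
DistributeT is identified with the (authenticated) sender of the link.\<close>
datatype ('p, 'v) msg =
    DistributeS "('p \<times> 'v) set"
  | AckM
  | ReadyM
  | ConfirmM
  | DistributeT "('p \<times> 'v) set"

text \<open>Events of an execution (all concern a correct process; faulty processes are
not modelled by states: messages from them may be received arbitrarily).
ArbDeliver i j m : process i arb-delivers message m from sender j.
Receive i j m : process i receives m from j over the link j -> i.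
Step i : process i executes one enabled guarded/pending action (3)-(10).\<close>
datatype ('p, 'v) event =
    Propose 'p 'v
  | ArbDeliver 'p 'p "'p \<times> 'v"
  | Receive 'p 'p "('p, 'v) msg"
  | Step 'p
  | Idle

record ('p, 'v) lstate =
  proposed :: bool
  S :: "('p \<times> 'v) set"
  T :: "('p \<times> 'v) set"
  U :: "('p \<times> 'v) set"
  sentT :: bool
  doneS :: bool
  pendS :: "('p \<times> ('p \<times> 'v) set) set"
  acks :: "'p set"
  doneReady :: bool
  readys :: "'p set"
  doneConf1 :: bool
  doneConf2 :: bool
  confirms :: "'p set"
  pendT :: "('p \<times> ('p \<times> 'v) set) set"
  acceptedT :: "'p set"
  delivered :: "('p \<times> 'v) set option"

definition init_lstate :: "('p, 'v) lstate" where
  "init_lstate = \<lparr>proposed = False, S = {}, T = {}, U = {}, sentT = False, doneS = False,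
     pendS = {}, acks = {}, doneReady = False, readys = {}, doneConf1 = False,
     doneConf2 = False, confirms = {}, pendT = {}, acceptedT = {}, delivered = None\<rparr>"

text \<open>Internal actions (3)-(10) of process i; out = set of (destination, message).\<close>
definition int_step ::
  "('p \<Rightarrow> 'p set set) \<Rightarrow> 'p \<Rightarrow> ('p, 'v) lstate \<Rightarrow> ('p, 'v) lstate
     \<Rightarrow> ('p \<times> ('p, 'v) msg) set \<Rightarrow> bool" where
  "int_step Qs i l l' out \<longleftrightarrow>
     \<comment> \<open>(3)\<close>
     (\<not> doneS l \<and> (\<exists>Q\<in>Qs i. \<forall>j\<in>Q. \<exists>x. (j, x) \<in> S l) \<and>
        l' = l\<lparr>doneS := True\<rparr> \<and> out = UNIV \<times> {DistributeS (S l)})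
   \<or> \<comment> \<open>(4)\<close>
     (\<exists>j Sj. (j, Sj) \<in> pendS l \<and> Sj \<subseteq> S l \<and>
        (if sentT l then l' = l\<lparr>pendS := pendS l - {(j, Sj)}\<rparr> \<and> out = {}
         else l' = l\<lparr>pendS := pendS l - {(j, Sj)}, T := T l \<union> Sj\<rparr> \<and> out = {(j, AckM)}))
   \<or> \<comment> \<open>(5)\<close>
     (\<not> doneReady l \<and> (\<exists>Q\<in>Qs i. Q \<subseteq> acks l) \<and>
        l' = l\<lparr>doneReady := True\<rparr> \<and> out = UNIV \<times> {ReadyM})
   \<or> \<comment> \<open>(6)\<close>
     (\<not> doneConf1 l \<and> (\<exists>Q\<in>Qs i. Q \<subseteq> readys l) \<and>
        l' = l\<lparr>doneConf1 := True\<rparr> \<and> out = UNIV \<times> {ConfirmM})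
   \<or> \<comment> \<open>(7)\<close>
     (\<not> doneConf2 l \<and> (\<exists>K\<in>kernels Qs i. K \<subseteq> confirms l) \<and>
        l' = l\<lparr>doneConf2 := True\<rparr> \<and> out = UNIV \<times> {ConfirmM})
   \<or> \<comment> \<open>(8)\<close>
     (\<not> sentT l \<and> (\<exists>Q\<in>Qs i. Q \<subseteq> confirms l) \<and>
        l' = l\<lparr>sentT := True\<rparr> \<and> out = UNIV \<times> {DistributeT (T l)})
   \<or> \<comment> \<open>(9)\<close>
     (\<exists>j Tj. (j, Tj) \<in> pendT l \<and> Tj \<subseteq> S l \<and>
        l' = l\<lparr>pendT := pendT l - {(j, Tj)}, U := U l \<union> Tj, acceptedT := insert j (acceptedT l)\<rparr>
        \<and> out = {})
   \<or> \<comment> \<open>(10)\<close>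
     (delivered l = None \<and> (\<exists>Q\<in>Qs i. Q \<subseteq> acceptedT l) \<and>
        l' = l\<lparr>delivered := Some (U l)\<rparr> \<and> out = {})"

fun recv_msg :: "'p \<Rightarrow> ('p, 'v) msg \<Rightarrow> ('p, 'v) lstate \<Rightarrow> ('p, 'v) lstate" where
  "recv_msg j (DistributeS X) l = l\<lparr>pendS := insert (j, X) (pendS l)\<rparr>"
| "recv_msg j AckM l = l\<lparr>acks := insert j (acks l)\<rparr>"
| "recv_msg j ReadyM l = l\<lparr>readys := insert j (readys l)\<rparr>"
| "recv_msg j ConfirmM l = l\<lparr>confirms := insert j (confirms l)\<rparr>"
| "recv_msg j (DistributeT X) l = l\<lparr>pendT := insert (j, X) (pendT l)\<rparr>"

text \<open>Global configuration: local states and the set of sent messages (from, to, msg).\<close>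
record ('p, 'v) config =
  lst :: "'p \<Rightarrow> ('p, 'v) lstate"
  net :: "('p \<times> 'p \<times> ('p, 'v) msg) set"

definition init_config :: "('p, 'v) config" where
  "init_config = \<lparr>lst = (\<lambda>_. init_lstate), net = {}\<rparr>"

definition gstep ::
  "('p \<Rightarrow> 'p set set) \<Rightarrow> 'p set \<Rightarrow> ('p, 'v) config \<Rightarrow> ('p, 'v) event
     \<Rightarrow> ('p, 'v) config \<Rightarrow> bool" where
  "gstep Qs F c e c' \<longleftrightarrow>
     (case e of
        Propose i x \<Rightarrow> i \<notin> F \<and> \<not> proposed (lst c i) \<and>
          c' = c\<lparr>lst := (lst c)(i := (lst c i)\<lparr>proposed := True\<rparr>)\<rparr>
      | ArbDeliver i j m \<Rightarrow> i \<notin> F \<and>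
          c' = c\<lparr>lst := (lst c)(i := (if fst m = j then (lst c i)\<lparr>S := insert m (S (lst c i))\<rparr>
                                       else lst c i))\<rparr>
      | Receive i j m \<Rightarrow> i \<notin> F \<and> (j \<in> F \<or> (j, i, m) \<in> net c) \<and>
          c' = c\<lparr>lst := (lst c)(i := recv_msg j m (lst c i))\<rparr>
      | Step i \<Rightarrow> i \<notin> F \<and> (\<exists>l' out. int_step Qs i (lst c i) l' out \<and>
          c' = \<lparr>lst = (lst c)(i := l'), net = net c \<union> {(i, k, m) | k m. (k, m) \<in> out}\<rparr>)
      | Idle \<Rightarrow> c' = c)"

text \<open>An execution of AG with faulty set F: a run of configurations c driven by events ev.
Action (1): the event Propose i x is ag-propose(x) at i, which arb-broadcasts (i, x).\<close>
definition execution ::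
  "('p \<Rightarrow> 'p set set) \<Rightarrow> 'p set \<Rightarrow> (nat \<Rightarrow> ('p, 'v) config) \<Rightarrow> (nat \<Rightarrow> ('p, 'v) event) \<Rightarrow> bool" where
  "execution Qs F c ev \<longleftrightarrow> c 0 = init_config \<and> (\<forall>t. gstep Qs F (c t) (ev t) (c (Suc t)))"

definition proposes_once :: "'p set \<Rightarrow> (nat \<Rightarrow> ('p, 'v) event) \<Rightarrow> bool" where
  "proposes_once F ev \<longleftrightarrow> (\<forall>i. i \<notin> F \<longrightarrow> (\<exists>t x. ev t = Propose i x))"

definition reliable_links ::
  "'p set \<Rightarrow> (nat \<Rightarrow> ('p, 'v) config) \<Rightarrow> (nat \<Rightarrow> ('p, 'v) event) \<Rightarrow> bool" where
  "reliable_links F c ev \<longleftrightarrow>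
     (\<forall>t i j m. i \<notin> F \<and> j \<notin> F \<and> (j, i, m) \<in> net (c t) \<longrightarrow> (\<exists>t'. ev t' = Receive i j m))"

definition arb_delivers :: "(nat \<Rightarrow> ('p, 'v) event) \<Rightarrow> 'p \<Rightarrow> 'p \<Rightarrow> 'p \<times> 'v \<Rightarrow> bool" where
  "arb_delivers ev i j m \<longleftrightarrow> (\<exists>t. ev t = ArbDeliver i j m)"

definition arb_spec ::
  "('p \<Rightarrow> 'p set set) \<Rightarrow> ('p \<Rightarrow> 'p set set) \<Rightarrow> 'p set \<Rightarrow> (nat \<Rightarrow> ('p, 'v) event) \<Rightarrow> bool" where
  "arb_spec Fs Qs F ev \<longleftrightarrow>
     (let G = max_guild Fs Qs F in
       (\<forall>j t x. j \<notin> F \<and> ev t = Propose j x \<longrightarrow> (\<forall>k\<in>G. arb_delivers ev k j (j, x))) \<and>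
       (\<forall>j k k' m m'. k \<in> G \<and> k' \<in> G \<and> arb_delivers ev k j m \<and> arb_delivers ev k' j m'
          \<longrightarrow> m = m') \<and>
       (\<forall>j k m. k \<in> G \<and> arb_delivers ev k j m \<longrightarrow> (\<forall>k'\<in>G. \<exists>m'. arb_delivers ev k' j m')) \<and>
       (\<forall>i j t t' m m'. i \<notin> F \<and> ev t = ArbDeliver i j m \<and> ev t' = ArbDeliver i j m' \<longrightarrow> t = t') \<and>
       (\<forall>i j t m. i \<notin> F \<and> j \<notin> F \<and> ev t = ArbDeliver i j m \<longrightarrow>
          (\<exists>t' x. t' < t \<and> ev t' = Propose j x \<and> m = (j, x))))"

definition ag_delivers :: "(nat \<Rightarrow> ('p, 'v) config) \<Rightarrow> 'p \<Rightarrow> ('p \<times> 'v) set \<Rightarrow> bool" where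
  "ag_delivers c i V \<longleftrightarrow> (\<exists>t. delivered (lst (c t) i) = Some V)"

definition ag_proposed :: "(nat \<Rightarrow> ('p, 'v) event) \<Rightarrow> 'p \<Rightarrow> 'v \<Rightarrow> bool" where
  "ag_proposed ev j x \<longleftrightarrow> (\<exists>t. ev t = Propose j x)"

end

theory Submission
  imports Defs
begin



definition "cS Qs F D c \<longleftrightarrow> (\<forall>i. S (lst c i) \<subseteq> D i)"
definition "cU Qs F D c \<longleftrightarrow> (\<forall>i. U (lst c i) \<subseteq> S (lst c i))"
definition "cDel Qs F D c \<longleftrightarrow> (\<forall>i V. delivered (lst c i) = Some V \<longrightarrow> V \<subseteq> S (lst c i) \<and> (\<exists>Q\<in>Qs i. \<forall>j\<in>Q. j\<notin>F \<longrightarrow> (\<exists>X. (j,i,DistributeT X) \<in> net c \<and> X \<subseteq> V)))"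
definition "cAcc Qs F D c \<longleftrightarrow> (\<forall>i j. j \<in> acceptedT (lst c i) \<longrightarrow> j\<notin>F \<longrightarrow> (\<exists>X. (j,i,DistributeT X) \<in> net c \<and> X \<subseteq> U (lst c i)))"
definition "cPT Qs F D c \<longleftrightarrow> (\<forall>i j X. (j,X) \<in> pendT (lst c i) \<longrightarrow> j\<notin>F \<longrightarrow> (j,i,DistributeT X) \<in> net c)"
definition "cDT Qs F D c \<longleftrightarrow> (\<forall>j a X. (j,a,DistributeT X) \<in> net c \<longrightarrow> j\<notin>F \<longrightarrow> sentT (lst c j) \<and> X = T (lst c j) \<and> (\<exists>Q\<in>Qs j. Q \<subseteq> confirms (lst c j)))"
definition "cCf Qs F D c \<longleftrightarrow> (\<forall>i j. j \<in> confirms (lst c i) \<longrightarrow> j\<notin>F \<longrightarrow> (j,i,ConfirmM) \<in> net c)"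
definition "cRd Qs F D c \<longleftrightarrow> (\<forall>i j. j \<in> readys (lst c i) \<longrightarrow> j\<notin>F \<longrightarrow> (j,i,ReadyM) \<in> net c)"
definition "cRM Qs F D c \<longleftrightarrow> (\<forall>i a. (i,a,ReadyM) \<in> net c \<longrightarrow> i\<notin>F \<longrightarrow> (\<exists>Q\<in>Qs i. Q \<subseteq> acks (lst c i)))"
definition "cAk Qs F D c \<longleftrightarrow> (\<forall>i j. j \<in> acks (lst c i) \<longrightarrow> j\<notin>F \<longrightarrow> (j,i,AckM) \<in> net c)"
definition "cAM Qs F D c \<longleftrightarrow> (\<forall>i j. (j,i,AckM) \<in> net c \<longrightarrow> j\<notin>F \<longrightarrow> i\<notin>F \<longrightarrow> (\<exists>X. (i,j,DistributeS X) \<in> net c \<and> X \<subseteq> T (lst c j)))"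
definition "cPS Qs F D c \<longleftrightarrow> (\<forall>i j X. (i,X) \<in> pendS (lst c j) \<longrightarrow> i\<notin>F \<longrightarrow> (i,j,DistributeS X) \<in> net c)"
definition "cDS Qs F D c \<longleftrightarrow> (\<forall>i a X. (i,a,DistributeS X) \<in> net c \<longrightarrow> i\<notin>F \<longrightarrow> doneS (lst c i) \<and> X \<subseteq> S (lst c i) \<and>
     (\<exists>Q\<in>Qs i. \<forall>j\<in>Q. \<exists>x. (j,x)\<in>X) \<and> (\<forall>b Y. (i,b,DistributeS Y) \<in> net c \<longrightarrow> Y = X))"

definition agInv :: "('p \<Rightarrow> 'p set set) \<Rightarrow> 'p set \<Rightarrow> ('p \<Rightarrow> ('p \<times> 'v) set) \<Rightarrow> ('p, 'v) config \<Rightarrow> bool" where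
"agInv Qs F D c \<longleftrightarrow> cS Qs F D c \<and> cU Qs F D c \<and> cDel Qs F D c \<and> cAcc Qs F D c \<and> cPT Qs F D c \<and>
   cDT Qs F D c \<and> cCf Qs F D c \<and> cRd Qs F D c \<and> cRM Qs F D c \<and> cAk Qs F D c \<and> cAM Qs F D c \<and>
   cPS Qs F D c \<and> cDS Qs F D c"

lemmas cdefs = cS_def cU_def cDel_def cAcc_def cPT_def cDT_def cCf_def cRd_def cRM_def cAk_def cAM_def cPS_def cDS_def

lemma inv_init: "agInv Qs F D init_config"
  by (simp add: agInv_def cdefs init_config_def init_lstate_def)

lemma inv_Sgrow:
  assumes "agInv Qs F D c" "net c' = net c"
    and "\<And>k. U (lst c' k) = U (lst c k)" "\<And>k. delivered (lst c' k) = delivered (lst c k)"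
    "\<And>k. acceptedT (lst c' k) = acceptedT (lst c k)" "\<And>k. pendT (lst c' k) = pendT (lst c k)"
    "\<And>k. sentT (lst c' k) = sentT (lst c k)" "\<And>k. T (lst c' k) = T (lst c k)"
    "\<And>k. confirms (lst c' k) = confirms (lst c k)" "\<And>k. readys (lst c' k) = readys (lst c k)"
    "\<And>k. acks (lst c' k) = acks (lst c k)" "\<And>k. pendS (lst c' k) = pendS (lst c k)"
    "\<And>k. doneS (lst c' k) = doneS (lst c k)"
    and Sm: "\<And>k. S (lst c k) \<subseteq> S (lst c' k)" and SD: "\<And>k. S (lst c' k) \<subseteq> D k"
  shows "agInv Qs F D c'"
proof -
  note eqs = assms(2-13)
  show ?thesis using assms(1) unfolding agInv_def cdefs eqs
    apply (elim conjE) apply (intro conjI)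
    subgoal using SD by blast
    subgoal using Sm by (meson subset_trans)
    subgoal using Sm by (meson subset_trans)
    subgoal by blast
    subgoal by blast
    subgoal by blast
    subgoal by blast
    subgoal by blast
    subgoal by blast
    subgoal by blast
    subgoal by blast
    subgoal by blast
    subgoal using Sm by (meson subset_trans)
    done
qed

lemma inv_propose:
  assumes "agInv Qs F D c"
  shows "agInv Qs F D (c\<lparr>lst := (lst c)(i := (lst c i)\<lparr>proposed := True\<rparr>)\<rparr>)"
proof -
  have SD: "\<forall>k. S (lst c k) \<subseteq> D k" using assms(1) by (simp add: agInv_def cS_def)
  show ?thesis
    apply (rule inv_Sgrow[OF assms(1)])
    by (use SD in \<open>auto\<close>)+
qed

lemma inv_arb:
  assumes "agInv Qs F D c" "fst m = j \<longrightarrow> m \<in> D i"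
  shows "agInv Qs F D (c\<lparr>lst := (lst c)(i := (if fst m = j then (lst c i)\<lparr>S := insert m (S (lst c i))\<rparr> else lst c i))\<rparr>)"
proof -
  have SD: "\<forall>k. S (lst c k) \<subseteq> D k" using assms(1) by (simp add: agInv_def cS_def)
  show ?thesis
    apply (rule inv_Sgrow[OF assms(1)])
    by (use SD assms(2) in \<open>auto\<close>)+
qed

lemma net_new[simp]: "((a,b,m') \<in> {(i,k,m) | k m. (k,m) \<in> out}) \<longleftrightarrow> a = i \<and> (b,m') \<in> out"
  by auto


definition stepc :: "('p, 'v) config \<Rightarrow> 'p \<Rightarrow> ('p, 'v) lstate \<Rightarrow> ('p \<times> ('p, 'v) msg) set \<Rightarrow> ('p, 'v) config" where
  "stepc c i l' out = \<lparr>lst = (lst c)(i := l'), net = net c \<union> {(i,k,m) | k m. (k,m) \<in> out}\<rparr>"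

lemma stepc_simps[simp]: "lst (stepc c i l' out) = (lst c)(i := l')"
  "net (stepc c i l' out) = net c \<union> {(i,k,m) | k m. (k,m) \<in> out}"
  by (simp_all add: stepc_def)

lemma cRM_mono: assumes "cRM Qs F D c" "net c' = net c" "\<And>k. acks (lst c k) \<subseteq> acks (lst c' k)" shows "cRM Qs F D c'"
  unfolding cRM_def
proof (intro allI impI)
  fix i a assume m: "(i,a,ReadyM) \<in> net c'" "i \<notin> F"
  then obtain Q where "Q \<in> Qs i" "Q \<subseteq> acks (lst c i)" using assms(1,2) unfolding cRM_def by auto
  then show "\<exists>Q\<in>Qs i. Q \<subseteq> acks (lst c' i)" using assms(3)[of i] by blast
qed

lemma cDT_mono: assumes "cDT Qs F D c" "net c' = net c" "\<And>k. confirms (lst c k) \<subseteq> confirms (lst c' k)"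
  "\<And>k. T (lst c' k) = T (lst c k)" "\<And>k. sentT (lst c' k) = sentT (lst c k)" shows "cDT Qs F D c'"
  unfolding cDT_def
proof (intro allI impI)
  fix j a X assume m: "(j,a,DistributeT X) \<in> net c'" "j \<notin> F"
  then have "sentT (lst c j) \<and> X = T (lst c j) \<and> (\<exists>Q\<in>Qs j. Q \<subseteq> confirms (lst c j))"
    using assms(1,2) unfolding cDT_def by auto
  then obtain Q where "sentT (lst c j)" "X = T (lst c j)" "Q \<in> Qs j" "Q \<subseteq> confirms (lst c j)" by blast
  moreover have "Q \<subseteq> confirms (lst c' j)" using calculation(4) assms(3)[of j] by (rule subset_trans)
  ultimately show "sentT (lst c' j) \<and> X = T (lst c' j) \<and> (\<exists>Q\<in>Qs j. Q \<subseteq> confirms (lst c' j))"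
    by (simp add: assms(4,5)) blast
qed

lemma cAM_mono: assumes "cAM Qs F D c" "net c \<subseteq> net c'" "\<And>a b. (a,b,AckM) \<in> net c' \<Longrightarrow> (a,b,AckM) \<in> net c"
  "\<And>k. T (lst c k) \<subseteq> T (lst c' k)" shows "cAM Qs F D c'"
  unfolding cAM_def
proof (intro allI impI)
  fix i j assume m: "(j,i,AckM) \<in> net c'" "j \<notin> F" "i \<notin> F"
  then obtain X where "(i,j,DistributeS X) \<in> net c" "X \<subseteq> T (lst c j)" using assms(1,3) unfolding cAM_def by blast
  then show "\<exists>X. (i,j,DistributeS X) \<in> net c' \<and> X \<subseteq> T (lst c' j)" using assms(2) assms(4)[of j] by (meson subsetD subset_trans)
qed

lemma cDel_mono: assumes "cDel Qs F D c" "net c \<subseteq> net c'" "\<And>k. delivered (lst c' k) = delivered (lst c k)"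
  "\<And>k. S (lst c k) \<subseteq> S (lst c' k)" shows "cDel Qs F D c'"
  unfolding cDel_def
proof (intro allI impI)
  fix i V assume m: "delivered (lst c' i) = Some V"
  then have "V \<subseteq> S (lst c i) \<and> (\<exists>Q\<in>Qs i. \<forall>j\<in>Q. j\<notin>F \<longrightarrow> (\<exists>X. (j,i,DistributeT X) \<in> net c \<and> X \<subseteq> V))"
    using assms(1,3) unfolding cDel_def by auto
  then obtain Q where Q: "V \<subseteq> S (lst c i)" "Q \<in> Qs i" "\<forall>j\<in>Q. j\<notin>F \<longrightarrow> (\<exists>X. (j,i,DistributeT X) \<in> net c \<and> X \<subseteq> V)" by blast
  have "V \<subseteq> S (lst c' i)" using Q(1) assms(4)[of i] by (rule subset_trans)
  moreover have "\<forall>j\<in>Q. j\<notin>F \<longrightarrow> (\<exists>X. (j,i,DistributeT X) \<in> net c' \<and> X \<subseteq> V)" using Q(3) assms(2) by blast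
  ultimately show "V \<subseteq> S (lst c' i) \<and> (\<exists>Q\<in>Qs i. \<forall>j\<in>Q. j\<notin>F \<longrightarrow> (\<exists>X. (j,i,DistributeT X) \<in> net c' \<and> X \<subseteq> V))"
    using Q(2) by blast
qed

lemma cAcc_mono: assumes "cAcc Qs F D c" "net c \<subseteq> net c'" "\<And>k. acceptedT (lst c' k) = acceptedT (lst c k)"
  "\<And>k. U (lst c' k) = U (lst c k)" shows "cAcc Qs F D c'"
  unfolding cAcc_def
proof (intro allI impI)
  fix i j assume m: "j \<in> acceptedT (lst c' i)" "j \<notin> F"
  then obtain X where "(j,i,DistributeT X) \<in> net c" "X \<subseteq> U (lst c i)" using assms(1,3) unfolding cAcc_def by blast
  then show "\<exists>X. (j,i,DistributeT X) \<in> net c' \<and> X \<subseteq> U (lst c' i)" using assms(2,4) by auto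
qed



lemma inv_recv0:
  assumes "agInv Qs F D c" "j \<in> F \<or> (j, i, DistributeS X) \<in> net c"
  shows "agInv Qs F D (c\<lparr>lst := (lst c)(i := recv_msg j (DistributeS X) (lst c i))\<rparr>)"
proof -
  from assms(1) have h: "cS Qs F D c" "cU Qs F D c" "cDel Qs F D c" "cAcc Qs F D c" "cPT Qs F D c" "cDT Qs F D c" "cCf Qs F D c" "cRd Qs F D c" "cRM Qs F D c" "cAk Qs F D c" "cAM Qs F D c" "cPS Qs F D c" "cDS Qs F D c" by (simp_all add: agInv_def)
  have g1: "cS Qs F D (c\<lparr>lst := (lst c)(i := recv_msg j (DistributeS X) (lst c i))\<rparr>)" using h(1) assms unfolding cS_def by (auto simp: )
  have g2: "cU Qs F D (c\<lparr>lst := (lst c)(i := recv_msg j (DistributeS X) (lst c i))\<rparr>)" using h(2) assms unfolding cU_def by (auto simp: )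
  have g3: "cDel Qs F D (c\<lparr>lst := (lst c)(i := recv_msg j (DistributeS X) (lst c i))\<rparr>)" using h(3) assms unfolding cDel_def by (auto simp: )
  have g4: "cAcc Qs F D (c\<lparr>lst := (lst c)(i := recv_msg j (DistributeS X) (lst c i))\<rparr>)" using h(4) assms unfolding cAcc_def by (auto simp: )
  have g5: "cPT Qs F D (c\<lparr>lst := (lst c)(i := recv_msg j (DistributeS X) (lst c i))\<rparr>)" using h(5) assms unfolding cPT_def by (auto simp: )
  have g6: "cDT Qs F D (c\<lparr>lst := (lst c)(i := recv_msg j (DistributeS X) (lst c i))\<rparr>)" using h(6) assms unfolding cDT_def by (auto simp: )
  have g7: "cCf Qs F D (c\<lparr>lst := (lst c)(i := recv_msg j (DistributeS X) (lst c i))\<rparr>)" using h(7) assms unfolding cCf_def by (auto simp: )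
  have g8: "cRd Qs F D (c\<lparr>lst := (lst c)(i := recv_msg j (DistributeS X) (lst c i))\<rparr>)" using h(8) assms unfolding cRd_def by (auto simp: )
  have g9: "cRM Qs F D (c\<lparr>lst := (lst c)(i := recv_msg j (DistributeS X) (lst c i))\<rparr>)" using h(9) assms unfolding cRM_def by (auto simp: )
  have g10: "cAk Qs F D (c\<lparr>lst := (lst c)(i := recv_msg j (DistributeS X) (lst c i))\<rparr>)" using h(10) assms unfolding cAk_def by (auto simp: )
  have g11: "cAM Qs F D (c\<lparr>lst := (lst c)(i := recv_msg j (DistributeS X) (lst c i))\<rparr>)" using h(11) assms unfolding cAM_def by (auto simp: )
  have g12: "cPS Qs F D (c\<lparr>lst := (lst c)(i := recv_msg j (DistributeS X) (lst c i))\<rparr>)" using h(12) assms unfolding cPS_def by (auto simp: )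
  have g13: "cDS Qs F D (c\<lparr>lst := (lst c)(i := recv_msg j (DistributeS X) (lst c i))\<rparr>)" using h(13) assms unfolding cDS_def by (auto simp: )
  show ?thesis using g1 g2 g3 g4 g5 g6 g7 g8 g9 g10 g11 g12 g13 by (simp add: agInv_def)
qed



lemma inv_recv1:
  assumes "agInv Qs F D c" "j \<in> F \<or> (j, i, AckM) \<in> net c"
  shows "agInv Qs F D (c\<lparr>lst := (lst c)(i := recv_msg j (AckM) (lst c i))\<rparr>)"
proof -
  from assms(1) have h: "cS Qs F D c" "cU Qs F D c" "cDel Qs F D c" "cAcc Qs F D c" "cPT Qs F D c" "cDT Qs F D c" "cCf Qs F D c" "cRd Qs F D c" "cRM Qs F D c" "cAk Qs F D c" "cAM Qs F D c" "cPS Qs F D c" "cDS Qs F D c" by (simp_all add: agInv_def)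
  have g14: "cS Qs F D (c\<lparr>lst := (lst c)(i := recv_msg j (AckM) (lst c i))\<rparr>)" using h(1) assms unfolding cS_def by (auto simp: )
  have g15: "cU Qs F D (c\<lparr>lst := (lst c)(i := recv_msg j (AckM) (lst c i))\<rparr>)" using h(2) assms unfolding cU_def by (auto simp: )
  have g16: "cDel Qs F D (c\<lparr>lst := (lst c)(i := recv_msg j (AckM) (lst c i))\<rparr>)" using h(3) assms unfolding cDel_def by (auto simp: )
  have g17: "cAcc Qs F D (c\<lparr>lst := (lst c)(i := recv_msg j (AckM) (lst c i))\<rparr>)" using h(4) assms unfolding cAcc_def by (auto simp: )
  have g18: "cPT Qs F D (c\<lparr>lst := (lst c)(i := recv_msg j (AckM) (lst c i))\<rparr>)" using h(5) assms unfolding cPT_def by (auto simp: )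
  have g19: "cDT Qs F D (c\<lparr>lst := (lst c)(i := recv_msg j (AckM) (lst c i))\<rparr>)" using h(6) assms unfolding cDT_def by (auto simp: )
  have g20: "cCf Qs F D (c\<lparr>lst := (lst c)(i := recv_msg j (AckM) (lst c i))\<rparr>)" using h(7) assms unfolding cCf_def by (auto simp: )
  have g21: "cRd Qs F D (c\<lparr>lst := (lst c)(i := recv_msg j (AckM) (lst c i))\<rparr>)" using h(8) assms unfolding cRd_def by (auto simp: )
  have g22: "cRM Qs F D (c\<lparr>lst := (lst c)(i := recv_msg j (AckM) (lst c i))\<rparr>)" by (rule cRM_mono[OF h(9)]) auto
  have g23: "cAk Qs F D (c\<lparr>lst := (lst c)(i := recv_msg j (AckM) (lst c i))\<rparr>)" using h(10) assms unfolding cAk_def by (auto simp: )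
  have g24: "cAM Qs F D (c\<lparr>lst := (lst c)(i := recv_msg j (AckM) (lst c i))\<rparr>)" using h(11) assms unfolding cAM_def by (auto simp: )
  have g25: "cPS Qs F D (c\<lparr>lst := (lst c)(i := recv_msg j (AckM) (lst c i))\<rparr>)" using h(12) assms unfolding cPS_def by (auto simp: )
  have g26: "cDS Qs F D (c\<lparr>lst := (lst c)(i := recv_msg j (AckM) (lst c i))\<rparr>)" using h(13) assms unfolding cDS_def by (auto simp: )
  show ?thesis using g14 g15 g16 g17 g18 g19 g20 g21 g22 g23 g24 g25 g26 by (simp add: agInv_def)
qed



lemma inv_recv2:
  assumes "agInv Qs F D c" "j \<in> F \<or> (j, i, ReadyM) \<in> net c"
  shows "agInv Qs F D (c\<lparr>lst := (lst c)(i := recv_msg j (ReadyM) (lst c i))\<rparr>)"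
proof -
  from assms(1) have h: "cS Qs F D c" "cU Qs F D c" "cDel Qs F D c" "cAcc Qs F D c" "cPT Qs F D c" "cDT Qs F D c" "cCf Qs F D c" "cRd Qs F D c" "cRM Qs F D c" "cAk Qs F D c" "cAM Qs F D c" "cPS Qs F D c" "cDS Qs F D c" by (simp_all add: agInv_def)
  have g27: "cS Qs F D (c\<lparr>lst := (lst c)(i := recv_msg j (ReadyM) (lst c i))\<rparr>)" using h(1) assms unfolding cS_def by (auto simp: )
  have g28: "cU Qs F D (c\<lparr>lst := (lst c)(i := recv_msg j (ReadyM) (lst c i))\<rparr>)" using h(2) assms unfolding cU_def by (auto simp: )
  have g29: "cDel Qs F D (c\<lparr>lst := (lst c)(i := recv_msg j (ReadyM) (lst c i))\<rparr>)" using h(3) assms unfolding cDel_def by (auto simp: )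
  have g30: "cAcc Qs F D (c\<lparr>lst := (lst c)(i := recv_msg j (ReadyM) (lst c i))\<rparr>)" using h(4) assms unfolding cAcc_def by (auto simp: )
  have g31: "cPT Qs F D (c\<lparr>lst := (lst c)(i := recv_msg j (ReadyM) (lst c i))\<rparr>)" using h(5) assms unfolding cPT_def by (auto simp: )
  have g32: "cDT Qs F D (c\<lparr>lst := (lst c)(i := recv_msg j (ReadyM) (lst c i))\<rparr>)" using h(6) assms unfolding cDT_def by (auto simp: )
  have g33: "cCf Qs F D (c\<lparr>lst := (lst c)(i := recv_msg j (ReadyM) (lst c i))\<rparr>)" using h(7) assms unfolding cCf_def by (auto simp: )
  have g34: "cRd Qs F D (c\<lparr>lst := (lst c)(i := recv_msg j (ReadyM) (lst c i))\<rparr>)" using h(8) assms unfolding cRd_def by (auto simp: )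
  have g35: "cRM Qs F D (c\<lparr>lst := (lst c)(i := recv_msg j (ReadyM) (lst c i))\<rparr>)" using h(9) assms unfolding cRM_def by (auto simp: )
  have g36: "cAk Qs F D (c\<lparr>lst := (lst c)(i := recv_msg j (ReadyM) (lst c i))\<rparr>)" using h(10) assms unfolding cAk_def by (auto simp: )
  have g37: "cAM Qs F D (c\<lparr>lst := (lst c)(i := recv_msg j (ReadyM) (lst c i))\<rparr>)" using h(11) assms unfolding cAM_def by (auto simp: )
  have g38: "cPS Qs F D (c\<lparr>lst := (lst c)(i := recv_msg j (ReadyM) (lst c i))\<rparr>)" using h(12) assms unfolding cPS_def by (auto simp: )
  have g39: "cDS Qs F D (c\<lparr>lst := (lst c)(i := recv_msg j (ReadyM) (lst c i))\<rparr>)" using h(13) assms unfolding cDS_def by (auto simp: )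
  show ?thesis using g27 g28 g29 g30 g31 g32 g33 g34 g35 g36 g37 g38 g39 by (simp add: agInv_def)
qed



lemma inv_recv3:
  assumes "agInv Qs F D c" "j \<in> F \<or> (j, i, ConfirmM) \<in> net c"
  shows "agInv Qs F D (c\<lparr>lst := (lst c)(i := recv_msg j (ConfirmM) (lst c i))\<rparr>)"
proof -
  from assms(1) have h: "cS Qs F D c" "cU Qs F D c" "cDel Qs F D c" "cAcc Qs F D c" "cPT Qs F D c" "cDT Qs F D c" "cCf Qs F D c" "cRd Qs F D c" "cRM Qs F D c" "cAk Qs F D c" "cAM Qs F D c" "cPS Qs F D c" "cDS Qs F D c" by (simp_all add: agInv_def)
  have g40: "cS Qs F D (c\<lparr>lst := (lst c)(i := recv_msg j (ConfirmM) (lst c i))\<rparr>)" using h(1) assms unfolding cS_def by (auto simp: )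
  have g41: "cU Qs F D (c\<lparr>lst := (lst c)(i := recv_msg j (ConfirmM) (lst c i))\<rparr>)" using h(2) assms unfolding cU_def by (auto simp: )
  have g42: "cDel Qs F D (c\<lparr>lst := (lst c)(i := recv_msg j (ConfirmM) (lst c i))\<rparr>)" using h(3) assms unfolding cDel_def by (auto simp: )
  have g43: "cAcc Qs F D (c\<lparr>lst := (lst c)(i := recv_msg j (ConfirmM) (lst c i))\<rparr>)" using h(4) assms unfolding cAcc_def by (auto simp: )
  have g44: "cPT Qs F D (c\<lparr>lst := (lst c)(i := recv_msg j (ConfirmM) (lst c i))\<rparr>)" using h(5) assms unfolding cPT_def by (auto simp: )
  have g45: "cDT Qs F D (c\<lparr>lst := (lst c)(i := recv_msg j (ConfirmM) (lst c i))\<rparr>)" by (rule cDT_mono[OF h(6)]) auto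
  have g46: "cCf Qs F D (c\<lparr>lst := (lst c)(i := recv_msg j (ConfirmM) (lst c i))\<rparr>)" using h(7) assms unfolding cCf_def by (auto simp: )
  have g47: "cRd Qs F D (c\<lparr>lst := (lst c)(i := recv_msg j (ConfirmM) (lst c i))\<rparr>)" using h(8) assms unfolding cRd_def by (auto simp: )
  have g48: "cRM Qs F D (c\<lparr>lst := (lst c)(i := recv_msg j (ConfirmM) (lst c i))\<rparr>)" using h(9) assms unfolding cRM_def by (auto simp: )
  have g49: "cAk Qs F D (c\<lparr>lst := (lst c)(i := recv_msg j (ConfirmM) (lst c i))\<rparr>)" using h(10) assms unfolding cAk_def by (auto simp: )
  have g50: "cAM Qs F D (c\<lparr>lst := (lst c)(i := recv_msg j (ConfirmM) (lst c i))\<rparr>)" using h(11) assms unfolding cAM_def by (auto simp: )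
  have g51: "cPS Qs F D (c\<lparr>lst := (lst c)(i := recv_msg j (ConfirmM) (lst c i))\<rparr>)" using h(12) assms unfolding cPS_def by (auto simp: )
  have g52: "cDS Qs F D (c\<lparr>lst := (lst c)(i := recv_msg j (ConfirmM) (lst c i))\<rparr>)" using h(13) assms unfolding cDS_def by (auto simp: )
  show ?thesis using g40 g41 g42 g43 g44 g45 g46 g47 g48 g49 g50 g51 g52 by (simp add: agInv_def)
qed



lemma inv_recv4:
  assumes "agInv Qs F D c" "j \<in> F \<or> (j, i, DistributeT X) \<in> net c"
  shows "agInv Qs F D (c\<lparr>lst := (lst c)(i := recv_msg j (DistributeT X) (lst c i))\<rparr>)"
proof -
  from assms(1) have h: "cS Qs F D c" "cU Qs F D c" "cDel Qs F D c" "cAcc Qs F D c" "cPT Qs F D c" "cDT Qs F D c" "cCf Qs F D c" "cRd Qs F D c" "cRM Qs F D c" "cAk Qs F D c" "cAM Qs F D c" "cPS Qs F D c" "cDS Qs F D c" by (simp_all add: agInv_def)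
  have g53: "cS Qs F D (c\<lparr>lst := (lst c)(i := recv_msg j (DistributeT X) (lst c i))\<rparr>)" using h(1) assms unfolding cS_def by (auto simp: )
  have g54: "cU Qs F D (c\<lparr>lst := (lst c)(i := recv_msg j (DistributeT X) (lst c i))\<rparr>)" using h(2) assms unfolding cU_def by (auto simp: )
  have g55: "cDel Qs F D (c\<lparr>lst := (lst c)(i := recv_msg j (DistributeT X) (lst c i))\<rparr>)" using h(3) assms unfolding cDel_def by (auto simp: )
  have g56: "cAcc Qs F D (c\<lparr>lst := (lst c)(i := recv_msg j (DistributeT X) (lst c i))\<rparr>)" using h(4) assms unfolding cAcc_def by (auto simp: )
  have g57: "cPT Qs F D (c\<lparr>lst := (lst c)(i := recv_msg j (DistributeT X) (lst c i))\<rparr>)" using h(5) assms unfolding cPT_def by (auto simp: )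
  have g58: "cDT Qs F D (c\<lparr>lst := (lst c)(i := recv_msg j (DistributeT X) (lst c i))\<rparr>)" using h(6) assms unfolding cDT_def by (auto simp: )
  have g59: "cCf Qs F D (c\<lparr>lst := (lst c)(i := recv_msg j (DistributeT X) (lst c i))\<rparr>)" using h(7) assms unfolding cCf_def by (auto simp: )
  have g60: "cRd Qs F D (c\<lparr>lst := (lst c)(i := recv_msg j (DistributeT X) (lst c i))\<rparr>)" using h(8) assms unfolding cRd_def by (auto simp: )
  have g61: "cRM Qs F D (c\<lparr>lst := (lst c)(i := recv_msg j (DistributeT X) (lst c i))\<rparr>)" using h(9) assms unfolding cRM_def by (auto simp: )
  have g62: "cAk Qs F D (c\<lparr>lst := (lst c)(i := recv_msg j (DistributeT X) (lst c i))\<rparr>)" using h(10) assms unfolding cAk_def by (auto simp: )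
  have g63: "cAM Qs F D (c\<lparr>lst := (lst c)(i := recv_msg j (DistributeT X) (lst c i))\<rparr>)" using h(11) assms unfolding cAM_def by (auto simp: )
  have g64: "cPS Qs F D (c\<lparr>lst := (lst c)(i := recv_msg j (DistributeT X) (lst c i))\<rparr>)" using h(12) assms unfolding cPS_def by (auto simp: )
  have g65: "cDS Qs F D (c\<lparr>lst := (lst c)(i := recv_msg j (DistributeT X) (lst c i))\<rparr>)" using h(13) assms unfolding cDS_def by (auto simp: )
  show ?thesis using g53 g54 g55 g56 g57 g58 g59 g60 g61 g62 g63 g64 g65 by (simp add: agInv_def)
qed



lemma inv_step3:
  assumes "agInv Qs F D c" "\<not> doneS (lst c i)" "\<exists>Q\<in>Qs i. \<forall>j\<in>Q. \<exists>x. (j, x) \<in> S (lst c i)"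
  shows "agInv Qs F D (stepc c i ((lst c i)\<lparr>doneS := True\<rparr>) (UNIV \<times> {DistributeS (S (lst c i))}))"
proof -
  from assms(1) have h: "cS Qs F D c" "cU Qs F D c" "cDel Qs F D c" "cAcc Qs F D c" "cPT Qs F D c" "cDT Qs F D c" "cCf Qs F D c" "cRd Qs F D c" "cRM Qs F D c" "cAk Qs F D c" "cAM Qs F D c" "cPS Qs F D c" "cDS Qs F D c" by (simp_all add: agInv_def)
  have g66: "cS Qs F D (stepc c i ((lst c i)\<lparr>doneS := True\<rparr>) (UNIV \<times> {DistributeS (S (lst c i))}))" using h(1) assms unfolding cS_def by (auto simp: )
  have g67: "cU Qs F D (stepc c i ((lst c i)\<lparr>doneS := True\<rparr>) (UNIV \<times> {DistributeS (S (lst c i))}))" using h(2) assms unfolding cU_def by (auto simp: )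
  have g68: "cDel Qs F D (stepc c i ((lst c i)\<lparr>doneS := True\<rparr>) (UNIV \<times> {DistributeS (S (lst c i))}))" using h(3) assms unfolding cDel_def by (auto simp: )
  have g69: "cAcc Qs F D (stepc c i ((lst c i)\<lparr>doneS := True\<rparr>) (UNIV \<times> {DistributeS (S (lst c i))}))" using h(4) assms unfolding cAcc_def by (auto simp: )
  have g70: "cPT Qs F D (stepc c i ((lst c i)\<lparr>doneS := True\<rparr>) (UNIV \<times> {DistributeS (S (lst c i))}))" using h(5) assms unfolding cPT_def by (auto simp: )
  have g71: "cDT Qs F D (stepc c i ((lst c i)\<lparr>doneS := True\<rparr>) (UNIV \<times> {DistributeS (S (lst c i))}))" using h(6) assms unfolding cDT_def by (auto simp: )
  have g72: "cCf Qs F D (stepc c i ((lst c i)\<lparr>doneS := True\<rparr>) (UNIV \<times> {DistributeS (S (lst c i))}))" using h(7) assms unfolding cCf_def by (auto simp: )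
  have g73: "cRd Qs F D (stepc c i ((lst c i)\<lparr>doneS := True\<rparr>) (UNIV \<times> {DistributeS (S (lst c i))}))" using h(8) assms unfolding cRd_def by (auto simp: )
  have g74: "cRM Qs F D (stepc c i ((lst c i)\<lparr>doneS := True\<rparr>) (UNIV \<times> {DistributeS (S (lst c i))}))" using h(9) assms unfolding cRM_def by (auto simp: )
  have g75: "cAk Qs F D (stepc c i ((lst c i)\<lparr>doneS := True\<rparr>) (UNIV \<times> {DistributeS (S (lst c i))}))" using h(10) assms unfolding cAk_def by (auto simp: )
  have g76: "cAM Qs F D (stepc c i ((lst c i)\<lparr>doneS := True\<rparr>) (UNIV \<times> {DistributeS (S (lst c i))}))" by (rule cAM_mono[OF h(11)]) auto
  have g77: "cPS Qs F D (stepc c i ((lst c i)\<lparr>doneS := True\<rparr>) (UNIV \<times> {DistributeS (S (lst c i))}))" using h(12) assms unfolding cPS_def by (auto simp: )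
  have g78: "cDS Qs F D (stepc c i ((lst c i)\<lparr>doneS := True\<rparr>) (UNIV \<times> {DistributeS (S (lst c i))}))" using h(13) assms unfolding cDS_def by (auto simp: )
  show ?thesis using g66 g67 g68 g69 g70 g71 g72 g73 g74 g75 g76 g77 g78 by (simp add: agInv_def)
qed



lemma inv_step4a:
  assumes "agInv Qs F D c" "(j, Sj) \<in> pendS (lst c i)" "sentT (lst c i)"
  shows "agInv Qs F D (stepc c i ((lst c i)\<lparr>pendS := pendS (lst c i) - {(j, Sj)}\<rparr>) ({}))"
proof -
  from assms(1) have h: "cS Qs F D c" "cU Qs F D c" "cDel Qs F D c" "cAcc Qs F D c" "cPT Qs F D c" "cDT Qs F D c" "cCf Qs F D c" "cRd Qs F D c" "cRM Qs F D c" "cAk Qs F D c" "cAM Qs F D c" "cPS Qs F D c" "cDS Qs F D c" by (simp_all add: agInv_def)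
  have g79: "cS Qs F D (stepc c i ((lst c i)\<lparr>pendS := pendS (lst c i) - {(j, Sj)}\<rparr>) ({}))" using h(1) assms unfolding cS_def by (auto simp: )
  have g80: "cU Qs F D (stepc c i ((lst c i)\<lparr>pendS := pendS (lst c i) - {(j, Sj)}\<rparr>) ({}))" using h(2) assms unfolding cU_def by (auto simp: )
  have g81: "cDel Qs F D (stepc c i ((lst c i)\<lparr>pendS := pendS (lst c i) - {(j, Sj)}\<rparr>) ({}))" using h(3) assms unfolding cDel_def by (auto simp: )
  have g82: "cAcc Qs F D (stepc c i ((lst c i)\<lparr>pendS := pendS (lst c i) - {(j, Sj)}\<rparr>) ({}))" using h(4) assms unfolding cAcc_def by (auto simp: )
  have g83: "cPT Qs F D (stepc c i ((lst c i)\<lparr>pendS := pendS (lst c i) - {(j, Sj)}\<rparr>) ({}))" using h(5) assms unfolding cPT_def by (auto simp: )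
  have g84: "cDT Qs F D (stepc c i ((lst c i)\<lparr>pendS := pendS (lst c i) - {(j, Sj)}\<rparr>) ({}))" using h(6) assms unfolding cDT_def by (auto simp: )
  have g85: "cCf Qs F D (stepc c i ((lst c i)\<lparr>pendS := pendS (lst c i) - {(j, Sj)}\<rparr>) ({}))" using h(7) assms unfolding cCf_def by (auto simp: )
  have g86: "cRd Qs F D (stepc c i ((lst c i)\<lparr>pendS := pendS (lst c i) - {(j, Sj)}\<rparr>) ({}))" using h(8) assms unfolding cRd_def by (auto simp: )
  have g87: "cRM Qs F D (stepc c i ((lst c i)\<lparr>pendS := pendS (lst c i) - {(j, Sj)}\<rparr>) ({}))" using h(9) assms unfolding cRM_def by (auto simp: )
  have g88: "cAk Qs F D (stepc c i ((lst c i)\<lparr>pendS := pendS (lst c i) - {(j, Sj)}\<rparr>) ({}))" using h(10) assms unfolding cAk_def by (auto simp: )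
  have g89: "cAM Qs F D (stepc c i ((lst c i)\<lparr>pendS := pendS (lst c i) - {(j, Sj)}\<rparr>) ({}))" using h(11) assms unfolding cAM_def by (auto simp: )
  have g90: "cPS Qs F D (stepc c i ((lst c i)\<lparr>pendS := pendS (lst c i) - {(j, Sj)}\<rparr>) ({}))" using h(12) assms unfolding cPS_def by (auto simp: )
  have g91: "cDS Qs F D (stepc c i ((lst c i)\<lparr>pendS := pendS (lst c i) - {(j, Sj)}\<rparr>) ({}))" using h(13) assms unfolding cDS_def by (auto simp: )
  show ?thesis using g79 g80 g81 g82 g83 g84 g85 g86 g87 g88 g89 g90 g91 by (simp add: agInv_def)
qed



lemma inv_step4b:
  assumes "agInv Qs F D c" "(j, Sj) \<in> pendS (lst c i)" "\<not> sentT (lst c i)" "i \<notin> F"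
  shows "agInv Qs F D (stepc c i ((lst c i)\<lparr>pendS := pendS (lst c i) - {(j, Sj)}, T := T (lst c i) \<union> Sj\<rparr>) ({(j, AckM)}))"
proof -
  from assms(1) have h: "cS Qs F D c" "cU Qs F D c" "cDel Qs F D c" "cAcc Qs F D c" "cPT Qs F D c" "cDT Qs F D c" "cCf Qs F D c" "cRd Qs F D c" "cRM Qs F D c" "cAk Qs F D c" "cAM Qs F D c" "cPS Qs F D c" "cDS Qs F D c" by (simp_all add: agInv_def)
  have g92: "cS Qs F D (stepc c i ((lst c i)\<lparr>pendS := pendS (lst c i) - {(j, Sj)}, T := T (lst c i) \<union> Sj\<rparr>) ({(j, AckM)}))" using h(1) assms unfolding cS_def by (auto simp: )
  have g93: "cU Qs F D (stepc c i ((lst c i)\<lparr>pendS := pendS (lst c i) - {(j, Sj)}, T := T (lst c i) \<union> Sj\<rparr>) ({(j, AckM)}))" using h(2) assms unfolding cU_def by (auto simp: )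
  have g94: "cDel Qs F D (stepc c i ((lst c i)\<lparr>pendS := pendS (lst c i) - {(j, Sj)}, T := T (lst c i) \<union> Sj\<rparr>) ({(j, AckM)}))" using h(3) assms unfolding cDel_def by (auto simp: )
  have g95: "cAcc Qs F D (stepc c i ((lst c i)\<lparr>pendS := pendS (lst c i) - {(j, Sj)}, T := T (lst c i) \<union> Sj\<rparr>) ({(j, AckM)}))" using h(4) assms unfolding cAcc_def by (auto simp: )
  have g96: "cPT Qs F D (stepc c i ((lst c i)\<lparr>pendS := pendS (lst c i) - {(j, Sj)}, T := T (lst c i) \<union> Sj\<rparr>) ({(j, AckM)}))" using h(5) assms unfolding cPT_def by (auto simp: )
  have g97: "cDT Qs F D (stepc c i ((lst c i)\<lparr>pendS := pendS (lst c i) - {(j, Sj)}, T := T (lst c i) \<union> Sj\<rparr>) ({(j, AckM)}))" using h(6) assms unfolding cDT_def by (auto simp: )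
  have g98: "cCf Qs F D (stepc c i ((lst c i)\<lparr>pendS := pendS (lst c i) - {(j, Sj)}, T := T (lst c i) \<union> Sj\<rparr>) ({(j, AckM)}))" using h(7) assms unfolding cCf_def by (auto simp: )
  have g99: "cRd Qs F D (stepc c i ((lst c i)\<lparr>pendS := pendS (lst c i) - {(j, Sj)}, T := T (lst c i) \<union> Sj\<rparr>) ({(j, AckM)}))" using h(8) assms unfolding cRd_def by (auto simp: )
  have g100: "cRM Qs F D (stepc c i ((lst c i)\<lparr>pendS := pendS (lst c i) - {(j, Sj)}, T := T (lst c i) \<union> Sj\<rparr>) ({(j, AckM)}))" using h(9) assms unfolding cRM_def by (auto simp: )
  have g101: "cAk Qs F D (stepc c i ((lst c i)\<lparr>pendS := pendS (lst c i) - {(j, Sj)}, T := T (lst c i) \<union> Sj\<rparr>) ({(j, AckM)}))" using h(10) assms unfolding cAk_def by (auto simp: )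
  have g102: "cAM Qs F D (stepc c i ((lst c i)\<lparr>pendS := pendS (lst c i) - {(j, Sj)}, T := T (lst c i) \<union> Sj\<rparr>) ({(j, AckM)}))" unfolding cAM_def
  proof (intro allI impI)
    fix a b assume m: "(b, a, AckM) \<in> net (stepc c i ((lst c i)\<lparr>pendS := pendS (lst c i) - {(j, Sj)}, T := T (lst c i) \<union> Sj\<rparr>) {(j, AckM)})" "b \<notin> F" "a \<notin> F"
    show "\<exists>X. (a, b, DistributeS X) \<in> net (stepc c i ((lst c i)\<lparr>pendS := pendS (lst c i) - {(j, Sj)}, T := T (lst c i) \<union> Sj\<rparr>) {(j, AckM)}) \<and> X \<subseteq> T (lst (stepc c i ((lst c i)\<lparr>pendS := pendS (lst c i) - {(j, Sj)}, T := T (lst c i) \<union> Sj\<rparr>) {(j, AckM)}) b)"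
    proof (cases "(b, a, AckM) \<in> net c")
      case True
      then obtain X where "(a, b, DistributeS X) \<in> net c" "X \<subseteq> T (lst c b)" using h(11) m unfolding cAM_def by blast
      then show ?thesis by auto
    next
      case False
      then have "b = i" "a = j" using m by auto
      moreover have "(j, i, DistributeS Sj) \<in> net c" using h(12) assms m \<open>a = j\<close> unfolding cPS_def by blast
      ultimately show ?thesis by auto
    qed
  qed
  have g103: "cPS Qs F D (stepc c i ((lst c i)\<lparr>pendS := pendS (lst c i) - {(j, Sj)}, T := T (lst c i) \<union> Sj\<rparr>) ({(j, AckM)}))" using h(12) assms unfolding cPS_def by (auto simp: )
  have g104: "cDS Qs F D (stepc c i ((lst c i)\<lparr>pendS := pendS (lst c i) - {(j, Sj)}, T := T (lst c i) \<union> Sj\<rparr>) ({(j, AckM)}))" using h(13) assms unfolding cDS_def by (auto simp: )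
  show ?thesis using g92 g93 g94 g95 g96 g97 g98 g99 g100 g101 g102 g103 g104 by (simp add: agInv_def)
qed



lemma inv_step5:
  assumes "agInv Qs F D c" "\<exists>Q\<in>Qs i. Q \<subseteq> acks (lst c i)"
  shows "agInv Qs F D (stepc c i ((lst c i)\<lparr>doneReady := True\<rparr>) (UNIV \<times> {ReadyM}))"
proof -
  from assms(1) have h: "cS Qs F D c" "cU Qs F D c" "cDel Qs F D c" "cAcc Qs F D c" "cPT Qs F D c" "cDT Qs F D c" "cCf Qs F D c" "cRd Qs F D c" "cRM Qs F D c" "cAk Qs F D c" "cAM Qs F D c" "cPS Qs F D c" "cDS Qs F D c" by (simp_all add: agInv_def)
  have g105: "cS Qs F D (stepc c i ((lst c i)\<lparr>doneReady := True\<rparr>) (UNIV \<times> {ReadyM}))" using h(1) assms unfolding cS_def by (auto simp: )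
  have g106: "cU Qs F D (stepc c i ((lst c i)\<lparr>doneReady := True\<rparr>) (UNIV \<times> {ReadyM}))" using h(2) assms unfolding cU_def by (auto simp: )
  have g107: "cDel Qs F D (stepc c i ((lst c i)\<lparr>doneReady := True\<rparr>) (UNIV \<times> {ReadyM}))" using h(3) assms unfolding cDel_def by (auto simp: )
  have g108: "cAcc Qs F D (stepc c i ((lst c i)\<lparr>doneReady := True\<rparr>) (UNIV \<times> {ReadyM}))" using h(4) assms unfolding cAcc_def by (auto simp: )
  have g109: "cPT Qs F D (stepc c i ((lst c i)\<lparr>doneReady := True\<rparr>) (UNIV \<times> {ReadyM}))" using h(5) assms unfolding cPT_def by (auto simp: )
  have g110: "cDT Qs F D (stepc c i ((lst c i)\<lparr>doneReady := True\<rparr>) (UNIV \<times> {ReadyM}))" using h(6) assms unfolding cDT_def by (auto simp: )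
  have g111: "cCf Qs F D (stepc c i ((lst c i)\<lparr>doneReady := True\<rparr>) (UNIV \<times> {ReadyM}))" using h(7) assms unfolding cCf_def by (auto simp: )
  have g112: "cRd Qs F D (stepc c i ((lst c i)\<lparr>doneReady := True\<rparr>) (UNIV \<times> {ReadyM}))" using h(8) assms unfolding cRd_def by (auto simp: )
  have g113: "cRM Qs F D (stepc c i ((lst c i)\<lparr>doneReady := True\<rparr>) (UNIV \<times> {ReadyM}))" using h(9) assms unfolding cRM_def by (auto simp: )
  have g114: "cAk Qs F D (stepc c i ((lst c i)\<lparr>doneReady := True\<rparr>) (UNIV \<times> {ReadyM}))" using h(10) assms unfolding cAk_def by (auto simp: )
  have g115: "cAM Qs F D (stepc c i ((lst c i)\<lparr>doneReady := True\<rparr>) (UNIV \<times> {ReadyM}))" using h(11) assms unfolding cAM_def by (auto simp: )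
  have g116: "cPS Qs F D (stepc c i ((lst c i)\<lparr>doneReady := True\<rparr>) (UNIV \<times> {ReadyM}))" using h(12) assms unfolding cPS_def by (auto simp: )
  have g117: "cDS Qs F D (stepc c i ((lst c i)\<lparr>doneReady := True\<rparr>) (UNIV \<times> {ReadyM}))" using h(13) assms unfolding cDS_def by (auto simp: )
  show ?thesis using g105 g106 g107 g108 g109 g110 g111 g112 g113 g114 g115 g116 g117 by (simp add: agInv_def)
qed



lemma inv_step6:
  assumes "agInv Qs F D c" 
  shows "agInv Qs F D (stepc c i ((lst c i)\<lparr>doneConf1 := True\<rparr>) (UNIV \<times> {ConfirmM}))"
proof -
  from assms(1) have h: "cS Qs F D c" "cU Qs F D c" "cDel Qs F D c" "cAcc Qs F D c" "cPT Qs F D c" "cDT Qs F D c" "cCf Qs F D c" "cRd Qs F D c" "cRM Qs F D c" "cAk Qs F D c" "cAM Qs F D c" "cPS Qs F D c" "cDS Qs F D c" by (simp_all add: agInv_def)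
  have g118: "cS Qs F D (stepc c i ((lst c i)\<lparr>doneConf1 := True\<rparr>) (UNIV \<times> {ConfirmM}))" using h(1) assms unfolding cS_def by (auto simp: )
  have g119: "cU Qs F D (stepc c i ((lst c i)\<lparr>doneConf1 := True\<rparr>) (UNIV \<times> {ConfirmM}))" using h(2) assms unfolding cU_def by (auto simp: )
  have g120: "cDel Qs F D (stepc c i ((lst c i)\<lparr>doneConf1 := True\<rparr>) (UNIV \<times> {ConfirmM}))" using h(3) assms unfolding cDel_def by (auto simp: )
  have g121: "cAcc Qs F D (stepc c i ((lst c i)\<lparr>doneConf1 := True\<rparr>) (UNIV \<times> {ConfirmM}))" using h(4) assms unfolding cAcc_def by (auto simp: )
  have g122: "cPT Qs F D (stepc c i ((lst c i)\<lparr>doneConf1 := True\<rparr>) (UNIV \<times> {ConfirmM}))" using h(5) assms unfolding cPT_def by (auto simp: )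
  have g123: "cDT Qs F D (stepc c i ((lst c i)\<lparr>doneConf1 := True\<rparr>) (UNIV \<times> {ConfirmM}))" using h(6) assms unfolding cDT_def by (auto simp: )
  have g124: "cCf Qs F D (stepc c i ((lst c i)\<lparr>doneConf1 := True\<rparr>) (UNIV \<times> {ConfirmM}))" using h(7) assms unfolding cCf_def by (auto simp: )
  have g125: "cRd Qs F D (stepc c i ((lst c i)\<lparr>doneConf1 := True\<rparr>) (UNIV \<times> {ConfirmM}))" using h(8) assms unfolding cRd_def by (auto simp: )
  have g126: "cRM Qs F D (stepc c i ((lst c i)\<lparr>doneConf1 := True\<rparr>) (UNIV \<times> {ConfirmM}))" using h(9) assms unfolding cRM_def by (auto simp: )
  have g127: "cAk Qs F D (stepc c i ((lst c i)\<lparr>doneConf1 := True\<rparr>) (UNIV \<times> {ConfirmM}))" using h(10) assms unfolding cAk_def by (auto simp: )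
  have g128: "cAM Qs F D (stepc c i ((lst c i)\<lparr>doneConf1 := True\<rparr>) (UNIV \<times> {ConfirmM}))" using h(11) assms unfolding cAM_def by (auto simp: )
  have g129: "cPS Qs F D (stepc c i ((lst c i)\<lparr>doneConf1 := True\<rparr>) (UNIV \<times> {ConfirmM}))" using h(12) assms unfolding cPS_def by (auto simp: )
  have g130: "cDS Qs F D (stepc c i ((lst c i)\<lparr>doneConf1 := True\<rparr>) (UNIV \<times> {ConfirmM}))" using h(13) assms unfolding cDS_def by (auto simp: )
  show ?thesis using g118 g119 g120 g121 g122 g123 g124 g125 g126 g127 g128 g129 g130 by (simp add: agInv_def)
qed



lemma inv_step7:
  assumes "agInv Qs F D c" 
  shows "agInv Qs F D (stepc c i ((lst c i)\<lparr>doneConf2 := True\<rparr>) (UNIV \<times> {ConfirmM}))"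
proof -
  from assms(1) have h: "cS Qs F D c" "cU Qs F D c" "cDel Qs F D c" "cAcc Qs F D c" "cPT Qs F D c" "cDT Qs F D c" "cCf Qs F D c" "cRd Qs F D c" "cRM Qs F D c" "cAk Qs F D c" "cAM Qs F D c" "cPS Qs F D c" "cDS Qs F D c" by (simp_all add: agInv_def)
  have g131: "cS Qs F D (stepc c i ((lst c i)\<lparr>doneConf2 := True\<rparr>) (UNIV \<times> {ConfirmM}))" using h(1) assms unfolding cS_def by (auto simp: )
  have g132: "cU Qs F D (stepc c i ((lst c i)\<lparr>doneConf2 := True\<rparr>) (UNIV \<times> {ConfirmM}))" using h(2) assms unfolding cU_def by (auto simp: )
  have g133: "cDel Qs F D (stepc c i ((lst c i)\<lparr>doneConf2 := True\<rparr>) (UNIV \<times> {ConfirmM}))" using h(3) assms unfolding cDel_def by (auto simp: )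
  have g134: "cAcc Qs F D (stepc c i ((lst c i)\<lparr>doneConf2 := True\<rparr>) (UNIV \<times> {ConfirmM}))" using h(4) assms unfolding cAcc_def by (auto simp: )
  have g135: "cPT Qs F D (stepc c i ((lst c i)\<lparr>doneConf2 := True\<rparr>) (UNIV \<times> {ConfirmM}))" using h(5) assms unfolding cPT_def by (auto simp: )
  have g136: "cDT Qs F D (stepc c i ((lst c i)\<lparr>doneConf2 := True\<rparr>) (UNIV \<times> {ConfirmM}))" using h(6) assms unfolding cDT_def by (auto simp: )
  have g137: "cCf Qs F D (stepc c i ((lst c i)\<lparr>doneConf2 := True\<rparr>) (UNIV \<times> {ConfirmM}))" using h(7) assms unfolding cCf_def by (auto simp: )
  have g138: "cRd Qs F D (stepc c i ((lst c i)\<lparr>doneConf2 := True\<rparr>) (UNIV \<times> {ConfirmM}))" using h(8) assms unfolding cRd_def by (auto simp: )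
  have g139: "cRM Qs F D (stepc c i ((lst c i)\<lparr>doneConf2 := True\<rparr>) (UNIV \<times> {ConfirmM}))" using h(9) assms unfolding cRM_def by (auto simp: )
  have g140: "cAk Qs F D (stepc c i ((lst c i)\<lparr>doneConf2 := True\<rparr>) (UNIV \<times> {ConfirmM}))" using h(10) assms unfolding cAk_def by (auto simp: )
  have g141: "cAM Qs F D (stepc c i ((lst c i)\<lparr>doneConf2 := True\<rparr>) (UNIV \<times> {ConfirmM}))" using h(11) assms unfolding cAM_def by (auto simp: )
  have g142: "cPS Qs F D (stepc c i ((lst c i)\<lparr>doneConf2 := True\<rparr>) (UNIV \<times> {ConfirmM}))" using h(12) assms unfolding cPS_def by (auto simp: )
  have g143: "cDS Qs F D (stepc c i ((lst c i)\<lparr>doneConf2 := True\<rparr>) (UNIV \<times> {ConfirmM}))" using h(13) assms unfolding cDS_def by (auto simp: )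
  show ?thesis using g131 g132 g133 g134 g135 g136 g137 g138 g139 g140 g141 g142 g143 by (simp add: agInv_def)
qed



lemma inv_step8:
  assumes "agInv Qs F D c" "\<not> sentT (lst c i)" "\<exists>Q\<in>Qs i. Q \<subseteq> confirms (lst c i)"
  shows "agInv Qs F D (stepc c i ((lst c i)\<lparr>sentT := True\<rparr>) (UNIV \<times> {DistributeT (T (lst c i))}))"
proof -
  from assms(1) have h: "cS Qs F D c" "cU Qs F D c" "cDel Qs F D c" "cAcc Qs F D c" "cPT Qs F D c" "cDT Qs F D c" "cCf Qs F D c" "cRd Qs F D c" "cRM Qs F D c" "cAk Qs F D c" "cAM Qs F D c" "cPS Qs F D c" "cDS Qs F D c" by (simp_all add: agInv_def)
  have g144: "cS Qs F D (stepc c i ((lst c i)\<lparr>sentT := True\<rparr>) (UNIV \<times> {DistributeT (T (lst c i))}))" using h(1) assms unfolding cS_def by (auto simp: )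
  have g145: "cU Qs F D (stepc c i ((lst c i)\<lparr>sentT := True\<rparr>) (UNIV \<times> {DistributeT (T (lst c i))}))" using h(2) assms unfolding cU_def by (auto simp: )
  have g146: "cDel Qs F D (stepc c i ((lst c i)\<lparr>sentT := True\<rparr>) (UNIV \<times> {DistributeT (T (lst c i))}))" by (rule cDel_mono[OF h(3)]) auto
  have g147: "cAcc Qs F D (stepc c i ((lst c i)\<lparr>sentT := True\<rparr>) (UNIV \<times> {DistributeT (T (lst c i))}))" by (rule cAcc_mono[OF h(4)]) auto
  have g148: "cPT Qs F D (stepc c i ((lst c i)\<lparr>sentT := True\<rparr>) (UNIV \<times> {DistributeT (T (lst c i))}))" using h(5) assms unfolding cPT_def by (auto simp: )
  have g149: "cDT Qs F D (stepc c i ((lst c i)\<lparr>sentT := True\<rparr>) (UNIV \<times> {DistributeT (T (lst c i))}))" using h(6) assms unfolding cDT_def by (auto simp: )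
  have g150: "cCf Qs F D (stepc c i ((lst c i)\<lparr>sentT := True\<rparr>) (UNIV \<times> {DistributeT (T (lst c i))}))" using h(7) assms unfolding cCf_def by (auto simp: )
  have g151: "cRd Qs F D (stepc c i ((lst c i)\<lparr>sentT := True\<rparr>) (UNIV \<times> {DistributeT (T (lst c i))}))" using h(8) assms unfolding cRd_def by (auto simp: )
  have g152: "cRM Qs F D (stepc c i ((lst c i)\<lparr>sentT := True\<rparr>) (UNIV \<times> {DistributeT (T (lst c i))}))" using h(9) assms unfolding cRM_def by (auto simp: )
  have g153: "cAk Qs F D (stepc c i ((lst c i)\<lparr>sentT := True\<rparr>) (UNIV \<times> {DistributeT (T (lst c i))}))" using h(10) assms unfolding cAk_def by (auto simp: )
  have g154: "cAM Qs F D (stepc c i ((lst c i)\<lparr>sentT := True\<rparr>) (UNIV \<times> {DistributeT (T (lst c i))}))" using h(11) assms unfolding cAM_def by (auto simp: )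
  have g155: "cPS Qs F D (stepc c i ((lst c i)\<lparr>sentT := True\<rparr>) (UNIV \<times> {DistributeT (T (lst c i))}))" using h(12) assms unfolding cPS_def by (auto simp: )
  have g156: "cDS Qs F D (stepc c i ((lst c i)\<lparr>sentT := True\<rparr>) (UNIV \<times> {DistributeT (T (lst c i))}))" using h(13) assms unfolding cDS_def by (auto simp: )
  show ?thesis using g144 g145 g146 g147 g148 g149 g150 g151 g152 g153 g154 g155 g156 by (simp add: agInv_def)
qed




lemma inv_step9:
  assumes "agInv Qs F D c" "(j, Tj) \<in> pendT (lst c i)" "Tj \<subseteq> S (lst c i)"
  shows "agInv Qs F D (stepc c i ((lst c i)\<lparr>pendT := pendT (lst c i) - {(j, Tj)}, U := U (lst c i) \<union> Tj, acceptedT := insert j (acceptedT (lst c i))\<rparr>) ({}))"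
proof -
  from assms(1) have h: "cS Qs F D c" "cU Qs F D c" "cDel Qs F D c" "cAcc Qs F D c" "cPT Qs F D c" "cDT Qs F D c" "cCf Qs F D c" "cRd Qs F D c" "cRM Qs F D c" "cAk Qs F D c" "cAM Qs F D c" "cPS Qs F D c" "cDS Qs F D c" by (simp_all add: agInv_def)
  have g157: "cS Qs F D (stepc c i ((lst c i)\<lparr>pendT := pendT (lst c i) - {(j, Tj)}, U := U (lst c i) \<union> Tj, acceptedT := insert j (acceptedT (lst c i))\<rparr>) ({}))" using h(1) assms unfolding cS_def by (auto simp: )
  have g158: "cU Qs F D (stepc c i ((lst c i)\<lparr>pendT := pendT (lst c i) - {(j, Tj)}, U := U (lst c i) \<union> Tj, acceptedT := insert j (acceptedT (lst c i))\<rparr>) ({}))" using h(2) assms unfolding cU_def by (auto simp: )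
  have g159: "cDel Qs F D (stepc c i ((lst c i)\<lparr>pendT := pendT (lst c i) - {(j, Tj)}, U := U (lst c i) \<union> Tj, acceptedT := insert j (acceptedT (lst c i))\<rparr>) ({}))" using h(3) assms unfolding cDel_def by (auto simp: )
  have g160: "cAcc Qs F D (stepc c i ((lst c i)\<lparr>pendT := pendT (lst c i) - {(j, Tj)}, U := U (lst c i) \<union> Tj, acceptedT := insert j (acceptedT (lst c i))\<rparr>) ({}))" unfolding cAcc_def
  proof (intro allI impI)
    fix a b assume m: "b \<in> acceptedT (lst (stepc c i ((lst c i)\<lparr>pendT := pendT (lst c i) - {(j, Tj)}, U := U (lst c i) \<union> Tj, acceptedT := insert j (acceptedT (lst c i))\<rparr>) {}) a)" "b \<notin> F"
    show "\<exists>X. (b, a, DistributeT X) \<in> net (stepc c i ((lst c i)\<lparr>pendT := pendT (lst c i) - {(j, Tj)}, U := U (lst c i) \<union> Tj, acceptedT := insert j (acceptedT (lst c i))\<rparr>) {}) \<and> X \<subseteq> U (lst (stepc c i ((lst c i)\<lparr>pendT := pendT (lst c i) - {(j, Tj)}, U := U (lst c i) \<union> Tj, acceptedT := insert j (acceptedT (lst c i))\<rparr>) {}) a)"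
    proof (cases "a = i \<and> b = j")
      case True
      then have "(b, a, DistributeT Tj) \<in> net c" using h(5) assms m unfolding cPT_def by blast
      then show ?thesis using True by auto
    next
      case False
      then have "b \<in> acceptedT (lst c a)" using m by (auto split: if_splits)
      then obtain X where "(b, a, DistributeT X) \<in> net c" "X \<subseteq> U (lst c a)" using h(4) m unfolding cAcc_def by blast
      then show ?thesis by auto
    qed
  qed
  have g161: "cPT Qs F D (stepc c i ((lst c i)\<lparr>pendT := pendT (lst c i) - {(j, Tj)}, U := U (lst c i) \<union> Tj, acceptedT := insert j (acceptedT (lst c i))\<rparr>) ({}))" using h(5) assms unfolding cPT_def by (auto simp: )
  have g162: "cDT Qs F D (stepc c i ((lst c i)\<lparr>pendT := pendT (lst c i) - {(j, Tj)}, U := U (lst c i) \<union> Tj, acceptedT := insert j (acceptedT (lst c i))\<rparr>) ({}))" using h(6) assms unfolding cDT_def by (auto simp: )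
  have g163: "cCf Qs F D (stepc c i ((lst c i)\<lparr>pendT := pendT (lst c i) - {(j, Tj)}, U := U (lst c i) \<union> Tj, acceptedT := insert j (acceptedT (lst c i))\<rparr>) ({}))" using h(7) assms unfolding cCf_def by (auto simp: )
  have g164: "cRd Qs F D (stepc c i ((lst c i)\<lparr>pendT := pendT (lst c i) - {(j, Tj)}, U := U (lst c i) \<union> Tj, acceptedT := insert j (acceptedT (lst c i))\<rparr>) ({}))" using h(8) assms unfolding cRd_def by (auto simp: )
  have g165: "cRM Qs F D (stepc c i ((lst c i)\<lparr>pendT := pendT (lst c i) - {(j, Tj)}, U := U (lst c i) \<union> Tj, acceptedT := insert j (acceptedT (lst c i))\<rparr>) ({}))" using h(9) assms unfolding cRM_def by (auto simp: )
  have g166: "cAk Qs F D (stepc c i ((lst c i)\<lparr>pendT := pendT (lst c i) - {(j, Tj)}, U := U (lst c i) \<union> Tj, acceptedT := insert j (acceptedT (lst c i))\<rparr>) ({}))" using h(10) assms unfolding cAk_def by (auto simp: )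
  have g167: "cAM Qs F D (stepc c i ((lst c i)\<lparr>pendT := pendT (lst c i) - {(j, Tj)}, U := U (lst c i) \<union> Tj, acceptedT := insert j (acceptedT (lst c i))\<rparr>) ({}))" using h(11) assms unfolding cAM_def by (auto simp: )
  have g168: "cPS Qs F D (stepc c i ((lst c i)\<lparr>pendT := pendT (lst c i) - {(j, Tj)}, U := U (lst c i) \<union> Tj, acceptedT := insert j (acceptedT (lst c i))\<rparr>) ({}))" using h(12) assms unfolding cPS_def by (auto simp: )
  have g169: "cDS Qs F D (stepc c i ((lst c i)\<lparr>pendT := pendT (lst c i) - {(j, Tj)}, U := U (lst c i) \<union> Tj, acceptedT := insert j (acceptedT (lst c i))\<rparr>) ({}))" using h(13) assms unfolding cDS_def by (auto simp: )
  show ?thesis using g157 g158 g159 g160 g161 g162 g163 g164 g165 g166 g167 g168 g169 by (simp add: agInv_def)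
qed



lemma inv_step10:
  assumes "agInv Qs F D c" "\<exists>Q\<in>Qs i. Q \<subseteq> acceptedT (lst c i)"
  shows "agInv Qs F D (stepc c i ((lst c i)\<lparr>delivered := Some (U (lst c i))\<rparr>) ({}))"
proof -
  from assms(1) have h: "cS Qs F D c" "cU Qs F D c" "cDel Qs F D c" "cAcc Qs F D c" "cPT Qs F D c" "cDT Qs F D c" "cCf Qs F D c" "cRd Qs F D c" "cRM Qs F D c" "cAk Qs F D c" "cAM Qs F D c" "cPS Qs F D c" "cDS Qs F D c" by (simp_all add: agInv_def)
  have g170: "cS Qs F D (stepc c i ((lst c i)\<lparr>delivered := Some (U (lst c i))\<rparr>) ({}))" using h(1) assms unfolding cS_def by (auto simp: )
  have g171: "cU Qs F D (stepc c i ((lst c i)\<lparr>delivered := Some (U (lst c i))\<rparr>) ({}))" using h(2) assms unfolding cU_def by (auto simp: )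
  have g172: "cDel Qs F D (stepc c i ((lst c i)\<lparr>delivered := Some (U (lst c i))\<rparr>) ({}))" unfolding cDel_def
  proof (intro allI impI)
    fix a V assume m: "delivered (lst (stepc c i ((lst c i)\<lparr>delivered := Some (U (lst c i))\<rparr>) ({})) a) = Some V"
    show "V \<subseteq> S (lst (stepc c i ((lst c i)\<lparr>delivered := Some (U (lst c i))\<rparr>) ({})) a) \<and> (\<exists>Q\<in>Qs a. \<forall>j\<in>Q. j \<notin> F \<longrightarrow> (\<exists>X. (j, a, DistributeT X) \<in> net (stepc c i ((lst c i)\<lparr>delivered := Some (U (lst c i))\<rparr>) ({})) \<and> X \<subseteq> V))"
    proof (cases "a = i")
      case True
      then have V: "V = U (lst c i)" using m by simp
      obtain Q where Q: "Q \<in> Qs i" "Q \<subseteq> acceptedT (lst c i)" using assms by blast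
      have "\<forall>j\<in>Q. j \<notin> F \<longrightarrow> (\<exists>X. (j, i, DistributeT X) \<in> net c \<and> X \<subseteq> V)"
        using h(4) Q V unfolding cAcc_def by blast
      moreover have "V \<subseteq> S (lst c i)" using h(2) V unfolding cU_def by blast
      ultimately show ?thesis using Q True by auto
    next
      case False
      then have "delivered (lst c a) = Some V" using m by simp
      then show ?thesis using h(3) False unfolding cDel_def by auto
    qed
  qed
  have g173: "cAcc Qs F D (stepc c i ((lst c i)\<lparr>delivered := Some (U (lst c i))\<rparr>) ({}))" using h(4) assms unfolding cAcc_def by (auto simp: )
  have g174: "cPT Qs F D (stepc c i ((lst c i)\<lparr>delivered := Some (U (lst c i))\<rparr>) ({}))" using h(5) assms unfolding cPT_def by (auto simp: )
  have g175: "cDT Qs F D (stepc c i ((lst c i)\<lparr>delivered := Some (U (lst c i))\<rparr>) ({}))" using h(6) assms unfolding cDT_def by (auto simp: )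
  have g176: "cCf Qs F D (stepc c i ((lst c i)\<lparr>delivered := Some (U (lst c i))\<rparr>) ({}))" using h(7) assms unfolding cCf_def by (auto simp: )
  have g177: "cRd Qs F D (stepc c i ((lst c i)\<lparr>delivered := Some (U (lst c i))\<rparr>) ({}))" using h(8) assms unfolding cRd_def by (auto simp: )
  have g178: "cRM Qs F D (stepc c i ((lst c i)\<lparr>delivered := Some (U (lst c i))\<rparr>) ({}))" using h(9) assms unfolding cRM_def by (auto simp: )
  have g179: "cAk Qs F D (stepc c i ((lst c i)\<lparr>delivered := Some (U (lst c i))\<rparr>) ({}))" using h(10) assms unfolding cAk_def by (auto simp: )
  have g180: "cAM Qs F D (stepc c i ((lst c i)\<lparr>delivered := Some (U (lst c i))\<rparr>) ({}))" using h(11) assms unfolding cAM_def by (auto simp: )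
  have g181: "cPS Qs F D (stepc c i ((lst c i)\<lparr>delivered := Some (U (lst c i))\<rparr>) ({}))" using h(12) assms unfolding cPS_def by (auto simp: )
  have g182: "cDS Qs F D (stepc c i ((lst c i)\<lparr>delivered := Some (U (lst c i))\<rparr>) ({}))" using h(13) assms unfolding cDS_def by (auto simp: )
  show ?thesis using g170 g171 g172 g173 g174 g175 g176 g177 g178 g179 g180 g181 g182 by (simp add: agInv_def)
qed





lemma int_step_confirm:
  assumes "int_step Qs i l l' out" "(a, ConfirmM) \<in> out"
  shows "(\<exists>Q\<in>Qs i. Q \<subseteq> readys l) \<or> (\<exists>K\<in>kernels Qs i. K \<subseteq> confirms l)"
  using assms unfolding int_step_def by (auto split: if_splits)

lemma gstep_net_mono:
  assumes "gstep Qs F c e c'" shows "net c \<subseteq> net c'"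
  using assms unfolding gstep_def by (cases e) auto

lemma gstep_confirm:
  assumes "gstep Qs F c e c'" "(g, a, ConfirmM) \<in> net c'" "(g, a, ConfirmM) \<notin> net c"
  shows "(\<exists>Q\<in>Qs g. Q \<subseteq> readys (lst c g)) \<or> (\<exists>K\<in>kernels Qs g. K \<subseteq> confirms (lst c g))"
proof (cases e)
  case (Step i)
  then obtain l' out where st: "int_step Qs i (lst c i) l' out"
    and c': "c' = \<lparr>lst = (lst c)(i := l'), net = net c \<union> {(i, k, m) |k m. (k, m) \<in> out}\<rparr>"
    using assms(1) unfolding gstep_def by auto
  then have "g = i" "(a, ConfirmM) \<in> out" using assms(2,3) by auto
  then show ?thesis using int_step_confirm[OF st] by blast
qed (use assms in \<open>auto simp: gstep_def\<close>)






lemma exec_inv: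
  assumes "execution Qs F c ev"
  shows "agInv Qs F (\<lambda>i. {m. \<exists>t. ev t = ArbDeliver i (fst m) m}) (c t)"
proof (induction t)
  case 0 show ?case using assms inv_init by (simp add: execution_def)
next
  case (Suc t)
  let ?D = "\<lambda>i. {m. \<exists>t. ev t = ArbDeliver i (fst m) m}"
  have g: "gstep Qs F (c t) (ev t) (c (Suc t))" using assms by (simp add: execution_def)
  show ?case
  proof (cases "ev t")
    case (Propose i x) then show ?thesis using g Suc.IH inv_propose by (auto simp: gstep_def)
  next
    case (ArbDeliver i j m)
    then have "fst m = j \<longrightarrow> m \<in> ?D i" by auto
    then show ?thesis using g Suc.IH inv_arb[of Qs F ?D "c t" m j i] ArbDeliver by (auto simp: gstep_def)
  next
    case (Receive i j m)
    then have h: "j \<in> F \<or> (j, i, m) \<in> net (c t)" "c (Suc t) = c t\<lparr>lst := (lst (c t))(i := recv_msg j m (lst (c t) i))\<rparr>"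
      using g by (auto simp: gstep_def)
    show ?thesis
    proof (cases m)
      case (DistributeS X) show ?thesis unfolding h(2) DistributeS by (rule inv_recv0[OF Suc.IH h(1)[unfolded DistributeS]])
    next
      case AckM show ?thesis unfolding h(2) AckM by (rule inv_recv1[OF Suc.IH h(1)[unfolded AckM]])
    next
      case ReadyM show ?thesis unfolding h(2) ReadyM by (rule inv_recv2[OF Suc.IH h(1)[unfolded ReadyM]])
    next
      case ConfirmM show ?thesis unfolding h(2) ConfirmM by (rule inv_recv3[OF Suc.IH h(1)[unfolded ConfirmM]])
    next
      case (DistributeT X) show ?thesis unfolding h(2) DistributeT by (rule inv_recv4[OF Suc.IH h(1)[unfolded DistributeT]])
    qed
  next
    case (Step i)
    then obtain l' out where st: "int_step Qs i (lst (c t) i) l' out" "i \<notin> F"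
      and c': "c (Suc t) = stepc (c t) i l' out"
      using g by (auto simp: gstep_def stepc_def)
    show ?thesis unfolding c' using st(1)[unfolded int_step_def] st(2) Suc.IH
      apply (elim disjE exE conjE)
      subgoal by (hypsubst, rule inv_step3; assumption)
      subgoal for j Sj by (cases "sentT (lst (c t) i)") (simp_all add: inv_step4a inv_step4b)
      subgoal by (hypsubst, rule inv_step5; assumption)
      subgoal by (hypsubst, rule inv_step6; assumption)
      subgoal by (hypsubst, rule inv_step7; assumption)
      subgoal by (hypsubst, rule inv_step8; assumption)
      subgoal by (hypsubst, rule inv_step9; assumption)
      subgoal by (hypsubst, rule inv_step10; assumption)
      done
  next
    case Idle then show ?thesis using g Suc.IH by (simp add: gstep_def)
  qed
qed







lemma agI_S: "agInv Qs F D c \<Longrightarrow> S (lst c i) \<subseteq> D i" unfolding agInv_def cS_def by blast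
lemma agI_Del: "agInv Qs F D c \<Longrightarrow> delivered (lst c i) = Some V \<Longrightarrow> V \<subseteq> S (lst c i) \<and> (\<exists>Q\<in>Qs i. \<forall>j\<in>Q. j\<notin>F \<longrightarrow> (\<exists>X. (j,i,DistributeT X) \<in> net c \<and> X \<subseteq> V))"
  unfolding agInv_def cDel_def by blast
lemma agI_DT: "agInv Qs F D c \<Longrightarrow> (j,a,DistributeT X) \<in> net c \<Longrightarrow> j\<notin>F \<Longrightarrow> sentT (lst c j) \<and> X = T (lst c j) \<and> (\<exists>Q\<in>Qs j. Q \<subseteq> confirms (lst c j))"
  unfolding agInv_def cDT_def by blast
lemma agI_Cf: "agInv Qs F D c \<Longrightarrow> j \<in> confirms (lst c i) \<Longrightarrow> j\<notin>F \<Longrightarrow> (j,i,ConfirmM) \<in> net c"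
  unfolding agInv_def cCf_def by blast
lemma agI_Rd: "agInv Qs F D c \<Longrightarrow> j \<in> readys (lst c i) \<Longrightarrow> j\<notin>F \<Longrightarrow> (j,i,ReadyM) \<in> net c"
  unfolding agInv_def cRd_def by blast
lemma agI_RM: "agInv Qs F D c \<Longrightarrow> (i,a,ReadyM) \<in> net c \<Longrightarrow> i\<notin>F \<Longrightarrow> (\<exists>Q\<in>Qs i. Q \<subseteq> acks (lst c i))"
  unfolding agInv_def cRM_def by blast
lemma agI_Ak: "agInv Qs F D c \<Longrightarrow> j \<in> acks (lst c i) \<Longrightarrow> j\<notin>F \<Longrightarrow> (j,i,AckM) \<in> net c"
  unfolding agInv_def cAk_def by blast
lemma agI_AM: "agInv Qs F D c \<Longrightarrow> (j,i,AckM) \<in> net c \<Longrightarrow> j\<notin>F \<Longrightarrow> i\<notin>F \<Longrightarrow> (\<exists>X. (i,j,DistributeS X) \<in> net c \<and> X \<subseteq> T (lst c j))"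
  unfolding agInv_def cAM_def by blast
lemma agI_DS: "agInv Qs F D c \<Longrightarrow> (i,a,DistributeS X) \<in> net c \<Longrightarrow> i\<notin>F \<Longrightarrow> doneS (lst c i) \<and> X \<subseteq> S (lst c i) \<and>
     (\<exists>Q\<in>Qs i. \<forall>j\<in>Q. \<exists>x. (j,x)\<in>X) \<and> (\<forall>b Y. (i,b,DistributeS Y) \<in> net c \<longrightarrow> Y = X)"
  unfolding agInv_def cDS_def by blast

lemma exec_net_mono:
  assumes "execution Qs F c ev" "t \<le> t'" shows "net (c t) \<subseteq> net (c t')"
proof -
  have "\<And>n. net (c n) \<subseteq> net (c (Suc n))" using assms(1) gstep_net_mono by (metis execution_def)
  then show ?thesis using lift_Suc_mono_le[of "\<lambda>n. net (c n)"] assms(2) by blast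
qed

theorem lemma3p8:
  fixes Fs Qs :: "'p::finite \<Rightarrow> 'p set set"
    and F :: "'p set"
    and c :: "nat \<Rightarrow> ('p, 'v) config"
    and ev :: "nat \<Rightarrow> ('p, 'v) event"
  assumes "asym_quorum_system Fs Qs"
    and "execution Qs F c ev"
    and "proposes_once F ev"
    and "reliable_links F c ev"
    and "arb_spec Fs Qs F ev"
    and "has_guild Fs Qs F"
  shows
    \<comment> \<open>Common Core\<close>
    "(\<exists>i\<in>max_guild Fs Qs F. \<exists>Q\<in>Qs i. \<exists>xs :: 'p \<Rightarrow> 'v.
        (\<forall>j\<in>Q. j \<notin> F \<longrightarrow> ag_proposed ev j (xs j)) \<and>
        (\<forall>k V. k \<in> max_guild Fs Qs F \<and> ag_delivers c k V \<longrightarrow> (\<lambda>j. (j, xs j)) ` Q \<subseteq> V))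
     \<and> \<comment> \<open>Validity\<close>
     (\<forall>k V j x. k \<in> max_guild Fs Qs F \<and> ag_delivers c k V \<and> (j, x) \<in> V \<and> wise Fs F j
        \<longrightarrow> ag_proposed ev j x)
     \<and> \<comment> \<open>Agreement\<close>
     (\<forall>k k' V V' j x x'. k \<in> max_guild Fs Qs F \<and> k' \<in> max_guild Fs Qs F \<and>
        ag_delivers c k V \<and> ag_delivers c k' V' \<and> (j, x) \<in> V \<and> (j, x') \<in> V' \<longrightarrow> x = x')"
proof -
  let ?MG = "max_guild Fs Qs F"
  define D where "D = (\<lambda>i. {m. \<exists>t. ev t = ArbDeliver i (fst m) m})"
  have I: "\<And>t. agInv Qs F D (c t)" using exec_inv[OF assms(2)] unfolding D_def by blast
  have AS: "(\<forall>j k k' m m'. k \<in> ?MG \<and> k' \<in> ?MG \<and> arb_delivers ev k j m \<and> arb_delivers ev k' j m'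
          \<longrightarrow> m = m') \<and> (\<forall>i j t m. i \<notin> F \<and> j \<notin> F \<and> ev t = ArbDeliver i j m \<longrightarrow>
          (\<exists>t' x. t' < t \<and> ev t' = Propose j x \<and> m = (j, x)))"
    using assms(5) unfolding arb_spec_def Let_def by (elim conjE) (intro conjI; assumption)
  have arb2: "\<And>j k k' m m'. k \<in> ?MG \<Longrightarrow> k' \<in> ?MG \<Longrightarrow> arb_delivers ev k j m \<Longrightarrow> arb_delivers ev k' j m' \<Longrightarrow> m = m'"
    using AS by blast
  have arb5: "\<And>i j t m. i \<notin> F \<Longrightarrow> j \<notin> F \<Longrightarrow> ev t = ArbDeliver i j m \<Longrightarrow> \<exists>t' x. t' < t \<and> ev t' = Propose j x \<and> m = (j,x)"
    using AS by blast
  have MGg: "\<And>i. i \<in> ?MG \<Longrightarrow> \<exists>G. guild Fs Qs F G \<and> i \<in> G" unfolding max_guild_def by blast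
  have MGw: "\<And>i. i \<in> ?MG \<Longrightarrow> wise Fs F i"
  proof -
    fix i assume "i \<in> ?MG"
    then obtain G where "guild Fs Qs F G" "i \<in> G" using MGg by blast
    then show "wise Fs F i" unfolding guild_def by blast
  qed
  have MGq: "\<And>i. i \<in> ?MG \<Longrightarrow> \<exists>Q\<in>Qs i. Q \<subseteq> ?MG"
  proof -
    fix i assume "i \<in> ?MG"
    then obtain G where G: "guild Fs Qs F G" "i \<in> G" using MGg by blast
    then obtain Q where "Q \<in> Qs i" "Q \<subseteq> G" unfolding guild_def by blast
    moreover have "G \<subseteq> ?MG" using G(1) unfolding max_guild_def by blast
    ultimately show "\<exists>Q\<in>Qs i. Q \<subseteq> ?MG" by blast
  qed
  have cons0: "\<forall>i j Qi Qj Fij. Qi \<in> Qs i \<and> Qj \<in> Qs j \<and>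
        Fij \<in> down_closure (Fs i) \<inter> down_closure (Fs j) \<longrightarrow> \<not> (Qi \<inter> Qj \<subseteq> Fij)"
    using assms(1) unfolding asym_quorum_system_def by (elim conjE)
  have cons: "\<And>i j Qi Qj. wise Fs F i \<Longrightarrow> wise Fs F j \<Longrightarrow> Qi \<in> Qs i \<Longrightarrow> Qj \<in> Qs j \<Longrightarrow> \<exists>x\<in>Qi\<inter>Qj. x \<notin> F"
  proof -
    fix i j Qi Qj assume a: "wise Fs F i" "wise Fs F j" "Qi \<in> Qs i" "Qj \<in> Qs j"
    then have "F \<in> down_closure (Fs i) \<inter> down_closure (Fs j)" unfolding wise_def by blast
    then have "\<not> (Qi \<inter> Qj \<subseteq> F)" using cons0 a(3,4) by blast
    then show "\<exists>x\<in>Qi\<inter>Qj. x \<notin> F" by blast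
  qed
  have wF: "\<And>i. wise Fs F i \<Longrightarrow> i \<notin> F" by (simp add: wise_def)
  have delD: "\<And>k V. ag_delivers c k V \<Longrightarrow> V \<subseteq> D k"
  proof -
    fix k V assume "ag_delivers c k V"
    then obtain t where t: "delivered (lst (c t) k) = Some V" unfolding ag_delivers_def by blast
    have "V \<subseteq> S (lst (c t) k)" using agI_Del[OF I t] by blast
    then show "V \<subseteq> D k" using agI_S[OF I, of t k] by blast
  qed
  have inD: "\<And>k j x. (j,x) \<in> D k \<Longrightarrow> \<exists>t. ev t = ArbDeliver k j (j,x)" by (auto simp: D_def)
  have propD: "\<And>k j x. k \<notin> F \<Longrightarrow> j \<notin> F \<Longrightarrow> (j,x) \<in> D k \<Longrightarrow> ag_proposed ev j x"
  proof -
    fix k j x assume a: "k \<notin> F" "j \<notin> F" "(j,x) \<in> D k"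
    then obtain t where "ev t = ArbDeliver k j (j,x)" using inD by blast
    then show "ag_proposed ev j x" using arb5[OF a(1,2)] unfolding ag_proposed_def by blast
  qed
  have validity: "\<forall>k V j x. k \<in> ?MG \<and> ag_delivers c k V \<and> (j, x) \<in> V \<and> wise Fs F j \<longrightarrow> ag_proposed ev j x"
  proof (intro allI impI)
    fix k V j x assume a: "k \<in> ?MG \<and> ag_delivers c k V \<and> (j, x) \<in> V \<and> wise Fs F j"
    then have "(j,x) \<in> D k" using delD by blast
    moreover have "k \<notin> F" using a MGw wF by blast
    moreover have "j \<notin> F" using a wF by blast
    ultimately show "ag_proposed ev j x" using propD by blast
  qed
  have agreement: "\<forall>k k' V V' j x x'. k \<in> ?MG \<and> k' \<in> ?MG \<and>
        ag_delivers c k V \<and> ag_delivers c k' V' \<and> (j, x) \<in> V \<and> (j, x') \<in> V' \<longrightarrow> x = x'"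
  proof (intro allI impI)
    fix k k' V V' j x x' assume a: "k \<in> ?MG \<and> k' \<in> ?MG \<and> ag_delivers c k V \<and> ag_delivers c k' V' \<and> (j, x) \<in> V \<and> (j, x') \<in> V'"
    then have "(j,x) \<in> D k" "(j,x') \<in> D k'" using delD by blast+
    then have "arb_delivers ev k j (j,x)" "arb_delivers ev k' j (j,x')"
      using inD unfolding arb_delivers_def by blast+
    then show "x = x'" using arb2 a by blast
  qed
  have core: "\<exists>i\<in>?MG. \<exists>Q\<in>Qs i. \<exists>xs :: 'p \<Rightarrow> 'v.
        (\<forall>j\<in>Q. j \<notin> F \<longrightarrow> ag_proposed ev j (xs j)) \<and>
        (\<forall>k V. k \<in> ?MG \<and> ag_delivers c k V \<longrightarrow> (\<lambda>j. (j, xs j)) ` Q \<subseteq> V)"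
  proof (cases "\<exists>k V. k \<in> ?MG \<and> ag_delivers c k V")
    case False
    obtain G where G: "G \<noteq> {}" "guild Fs Qs F G" using assms(6) unfolding has_guild_def by blast
    then obtain i where i: "i \<in> G" by blast
    then have iM: "i \<in> ?MG" using G unfolding max_guild_def by blast
    then obtain Q where Q: "Q \<in> Qs i" using MGq by blast
    define xs where "xs = (\<lambda>j. SOME x. ag_proposed ev j x)"
    have "\<forall>j\<in>Q. j \<notin> F \<longrightarrow> ag_proposed ev j (xs j)"
    proof (intro ballI impI)
      fix j assume "j \<notin> F"
      then have "\<exists>x. ag_proposed ev j x" using assms(3) unfolding proposes_once_def ag_proposed_def by blast
      then show "ag_proposed ev j (xs j)" unfolding xs_def by (rule someI_ex)
    qed
    then show ?thesis using False iM Q by blast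
  next
    case True
    then obtain k0 V0 t1 where k0: "k0 \<in> ?MG" "delivered (lst (c t1) k0) = Some V0"
      unfolding ag_delivers_def by blast
    define P where "P t \<longleftrightarrow> (\<exists>g\<in>?MG. \<exists>a. (g,a,ConfirmM) \<in> net (c t))" for t
    have "P t1"
    proof -
      obtain Qk where Qk: "Qk \<in> Qs k0" "\<forall>j\<in>Qk. j\<notin>F \<longrightarrow> (\<exists>X. (j,k0,DistributeT X) \<in> net (c t1) \<and> X \<subseteq> V0)"
        using agI_Del[OF I k0(2)] by blast
      obtain Q' where Q': "Q' \<in> Qs k0" "Q' \<subseteq> ?MG" using MGq k0(1) by blast
      obtain j1 where j1: "j1 \<in> Qk" "j1 \<in> Q'" "j1 \<notin> F" using cons[OF MGw[OF k0(1)] MGw[OF k0(1)] Qk(1) Q'(1)] by blast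
      then obtain X where "(j1,k0,DistributeT X) \<in> net (c t1)" using Qk by blast
      then obtain Qj where Qj: "Qj \<in> Qs j1" "Qj \<subseteq> confirms (lst (c t1) j1)" using agI_DT[OF I _ j1(3)] by blast
      have j1M: "j1 \<in> ?MG" using j1 Q' by blast
      obtain Q'' where Q'': "Q'' \<in> Qs j1" "Q'' \<subseteq> ?MG" using MGq j1M by blast
      obtain g where g: "g \<in> Qj" "g \<in> Q''" "g \<notin> F" using cons[OF MGw[OF j1M] MGw[OF j1M] Qj(1) Q''(1)] by blast
      have "(g, j1, ConfirmM) \<in> net (c t1)" using agI_Cf[OF I _ g(3)] g(1) Qj(2) by blast
      then show ?thesis unfolding P_def using g Q'' by blast
    qed
    then have "\<exists>n. P n \<and> (\<forall>m<n. \<not> P m)" using exists_least_iff[of P] by blast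
    then obtain t0 where t0: "P t0" "\<And>s. s < t0 \<Longrightarrow> \<not> P s" by blast
    have "net (c 0) = {}" using assms(2) by (simp add: execution_def init_config_def)
    have "t0 \<noteq> 0"
    proof
      assume "t0 = 0"
      then show False using t0(1) \<open>net (c 0) = {}\<close> unfolding P_def by auto
    qed
    then obtain s where s: "t0 = Suc s" using not0_implies_Suc by blast
    obtain g a where g: "g \<in> ?MG" "(g,a,ConfirmM) \<in> net (c (Suc s))" using t0(1) s unfolding P_def by blast
    have nP: "\<not> P s" using t0(2) s by blast
    then have "(g,a,ConfirmM) \<notin> net (c s)" using g(1) unfolding P_def by blast
    moreover have gs: "gstep Qs F (c s) (ev s) (c (Suc s))" using assms(2) by (simp add: execution_def)
    ultimately have alt: "(\<exists>Q\<in>Qs g. Q \<subseteq> readys (lst (c s) g)) \<or> (\<exists>K\<in>kernels Qs g. K \<subseteq> confirms (lst (c s) g))"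
      using gstep_confirm[OF gs g(2)] by blast
    obtain Qg where Qg: "Qg \<in> Qs g" "Qg \<subseteq> ?MG" using MGq g(1) by blast
    obtain r tr where r: "r \<in> ?MG" "(r, g, ReadyM) \<in> net (c tr)"
    proof -
      have "\<not> (\<exists>K\<in>kernels Qs g. K \<subseteq> confirms (lst (c s) g))"
      proof
        assume "\<exists>K\<in>kernels Qs g. K \<subseteq> confirms (lst (c s) g)"
        then obtain K where K: "K \<in> kernels Qs g" "K \<subseteq> confirms (lst (c s) g)" by blast
        then obtain j where j: "j \<in> K" "j \<in> Qg" using Qg(1) unfolding kernels_def by blast
        then have jM: "j \<in> ?MG" using Qg by blast
        then have "(j, g, ConfirmM) \<in> net (c s)" using agI_Cf[OF I _ wF[OF MGw[OF jM]]] j K by blast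
        then show False using nP jM unfolding P_def by blast
      qed
      then obtain Q where Q: "Q \<in> Qs g" "Q \<subseteq> readys (lst (c s) g)" using alt by blast
      obtain r where r: "r \<in> Q" "r \<in> Qg" "r \<notin> F" using cons[OF MGw[OF g(1)] MGw[OF g(1)] Q(1) Qg(1)] by blast
      have "(r, g, ReadyM) \<in> net (c s)" using agI_Rd[OF I _ r(3)] r(1) Q(2) by blast
      then show ?thesis using that r Qg by blast
    qed
    have rnF: "r \<notin> F" using wF[OF MGw[OF r(1)]] .
    obtain Qr where Qr: "Qr \<in> Qs r" "Qr \<subseteq> acks (lst (c tr) r)" using agI_RM[OF I r(2) rnF] by blast
    have ackj: "\<And>j. j \<in> Qr \<Longrightarrow> j \<notin> F \<Longrightarrow> (j, r, AckM) \<in> net (c tr)" using agI_Ak[OF I] Qr(2) by blast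
    obtain j0 where j0: "j0 \<in> Qr" "j0 \<notin> F" using cons[OF MGw[OF r(1)] MGw[OF r(1)] Qr(1) Qr(1)] by blast
    obtain X0 where X0: "(r, j0, DistributeS X0) \<in> net (c tr)" using agI_AM[OF I ackj[OF j0] j0(2) rnF] by blast
    have DS0: "doneS (lst (c tr) r) \<and> X0 \<subseteq> S (lst (c tr) r) \<and> (\<exists>Q\<in>Qs r. \<forall>j\<in>Q. \<exists>x. (j,x)\<in>X0)"
      using agI_DS[OF I X0 rnF] by blast
    then obtain Qs0 where Qs0: "Qs0 \<in> Qs r" "\<forall>j\<in>Qs0. \<exists>x. (j,x)\<in>X0" by blast
    define xs where "xs = (\<lambda>j. SOME x. (j,x) \<in> X0)"
    have xsX: "\<And>j. j \<in> Qs0 \<Longrightarrow> (j, xs j) \<in> X0" unfolding xs_def using Qs0(2) by (metis someI_ex)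
    have propQ: "\<forall>j\<in>Qs0. j \<notin> F \<longrightarrow> ag_proposed ev j (xs j)"
    proof (intro ballI impI)
      fix j assume "j \<in> Qs0" "j \<notin> F"
      moreover have "(j, xs j) \<in> D r" using xsX[OF \<open>j \<in> Qs0\<close>] DS0 agI_S[OF I] by blast
      ultimately show "ag_proposed ev j (xs j)" using propD rnF by blast
    qed
    have subQ: "\<forall>k V. k \<in> ?MG \<and> ag_delivers c k V \<longrightarrow> (\<lambda>j. (j, xs j)) ` Qs0 \<subseteq> V"
    proof (intro allI impI)
      fix k V assume a: "k \<in> ?MG \<and> ag_delivers c k V"
      then obtain t2 where t2: "delivered (lst (c t2) k) = Some V" unfolding ag_delivers_def by blast
      obtain Qk where Qk: "Qk \<in> Qs k" "\<forall>j\<in>Qk. j\<notin>F \<longrightarrow> (\<exists>X. (j,k,DistributeT X) \<in> net (c t2) \<and> X \<subseteq> V)"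
        using agI_Del[OF I t2] by blast
      obtain j where j: "j \<in> Qk" "j \<in> Qr" "j \<notin> F" using cons[OF MGw MGw[OF r(1)] Qk(1) Qr(1)] a by blast
      obtain XT where XT: "(j,k,DistributeT XT) \<in> net (c t2)" "XT \<subseteq> V" using Qk(2) j by blast
      define tm where "tm = max t2 tr"
      have m2: "net (c t2) \<subseteq> net (c tm)" "net (c tr) \<subseteq> net (c tm)"
        using exec_net_mono[OF assms(2)] unfolding tm_def by auto
      have XTe: "XT = T (lst (c tm) j)" using agI_DT[OF I _ j(3)] XT(1) m2(1) by blast
      have "(j, r, AckM) \<in> net (c tm)" using ackj[OF j(2,3)] m2(2) by blast
      then obtain X where X: "(r,j,DistributeS X) \<in> net (c tm)" "X \<subseteq> T (lst (c tm) j)"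
        using agI_AM[OF I _ j(3) rnF] by blast
      have "X = X0" using agI_DS[OF I X(1) rnF] X0 m2(2) by blast
      then have "X0 \<subseteq> V" using X(2) XTe XT(2) by blast
      then show "(\<lambda>j. (j, xs j)) ` Qs0 \<subseteq> V" using xsX by blast
    qed
    show ?thesis using r(1) Qs0(1) propQ subQ by blast
  qed
  show ?thesis using core validity agreement by blast
qed


end
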